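(* Assume the index vectors $\mathbf v_1,\dots,\mathbf v_k\in\mathbb R^d$ are orthonormal. Let $\mathbf w(t)$ solve $\frac{d}{dt}\mathbf w=-(I_d-\mathbf w\mathbf w^T)\nabla L(\mathbf w)$ from a unit vector $\mathbf w(0)$ and let $\mathbf u_j(t)=\mathbf v_j^T\mathbf w(t)$. Let $\ell\in[k]$ and $I=[k]\setminus[\ell]$. (a) Assume $\mathbf u_j(0)>0$ for all $j\in[k]$ and $\mathbf u_1(0)=\dots=\mathbf u_\ell(0)>\max_{j\in I}\mathbf u_j(0)$. If $\sigma^*$ has information exponent $p^*\ge3$, then $\lim_{t\to\infty}\mathbf u_j(t)=1/\sqrt{\ell}$ for $j\in[\ell]$ and $\lim_{t\to\infty}\mathbf u_j(t)=0$ for $j\in I$. (b) If $\sigma^*$ is even with information exponent $p^*\ge4$, and $|\mathbf u_1(0)|=\dots=|\mathbf u_\ell(0)|>\max_{j\in I}|\mathbf u_j(0)|$, then $\lim_{t\to\infty}\mathbf u_j(t)=\operatorname{sgn}(\mathbf u_j(0))/\sqrt{\ell}$ for $j\in[\ell]$ and $\lim_{t\to\infty}\mathbf u_j(t)=0$ for $j\in I$.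
   Context: Let $h_p$ be the probabilist's Hermite polynomials normalized to be orthonormal in $L^2$ of the standard Gaussian measure. Let $\sigma,\sigma^*:\mathbb R\to\mathbb R$ be square integrable w.r.t. the standard Gaussian, with $\sigma=\sum_{p\ge1}a_ph_p$, $\sigma^*=\sum_{p\ge1}b_ph_p$; the information exponent is $p^*=\min\{p:b_p\neq0\}$ and $c_p=a_pb_p$. Standing assumptions: $c_{p^*}>0$, $c_p\ge0$ for all $p\ge p^*$, and $\sum_{p\ge p^*}c_p\,p<\infty$. The loss is $L(\mathbf w)=C-\mathbb E_{\mathbf x\sim\mathcal N(0,I_d)}\big[\sigma(\mathbf w^T\mathbf x)\sum_{j=1}^k\sigma^*(\mathbf v_j^T\mathbf x)\big]$, which for unit $\mathbf w$ equals $C-\sum_{p\ge p^*}c_p\sum_j(\mathbf v_j^T\mathbf w)^p$; this formula defines $L$ and its Euclidean gradient $\nabla L$ on $\mathbb R^d$. *)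

theory Defs
  imports "HOL-Probability.Probability"
begin

fun hermite_prob :: "nat \<Rightarrow> real \<Rightarrow> real" where
  "hermite_prob 0 x = 1"
| "hermite_prob (Suc 0) x = x"
| "hermite_prob (Suc (Suc n)) x = x * hermite_prob (Suc n) x - real (Suc n) * hermite_prob n x"

(* normalized Hermite polynomials h_p = He_p / sqrt(p!), orthonormal in L^2(N(0,1)) *)
definition hermite_h :: "nat \<Rightarrow> real \<Rightarrow> real" where
  "hermite_h p x = hermite_prob p x / sqrt (fact p)"

definition gauss_L2 :: "(real \<Rightarrow> real) \<Rightarrow> bool" where
  "gauss_L2 f \<longleftrightarrow> f \<in> borel_measurable borel \<and>
     integrable lborel (\<lambda>x. (f x)\<^sup>2 * std_normal_density x)"

(* Hermite coefficient: f = sum_p (hcoeff f p) h_p in L^2(N(0,1)) *)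
definition hcoeff :: "(real \<Rightarrow> real) \<Rightarrow> nat \<Rightarrow> real" where
  "hcoeff f p = (LINT x|lborel. f x * hermite_h p x * std_normal_density x)"

definition info_exp :: "(real \<Rightarrow> real) \<Rightarrow> nat" where
  "info_exp f = (LEAST p. hcoeff f p \<noteq> 0)"

definition ccoef :: "(real \<Rightarrow> real) \<Rightarrow> (real \<Rightarrow> real) \<Rightarrow> nat \<Rightarrow> real" where
  "ccoef \<sigma> \<sigma>s p = hcoeff \<sigma> p * hcoeff \<sigma>s p"

definition loss :: "real \<Rightarrow> (real \<Rightarrow> real) \<Rightarrow> (real \<Rightarrow> real) \<Rightarrow> nat \<Rightarrow> (nat \<Rightarrow> real^'d)
     \<Rightarrow> real^'d \<Rightarrow> real" where
  "loss C \<sigma> \<sigma>s k v w = C - (\<Sum>p. ccoef \<sigma> \<sigma>s p * (\<Sum>j\<in>{1..k}. (v j \<bullet> w) ^ p))"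

(* Euclidean gradient of the formula above:
   grad L(w) = - sum_p c_p p sum_j (v_j^T w)^(p-1) v_j *)
definition loss_grad :: "(real \<Rightarrow> real) \<Rightarrow> (real \<Rightarrow> real) \<Rightarrow> nat \<Rightarrow> (nat \<Rightarrow> real^'d)
     \<Rightarrow> real^'d \<Rightarrow> real^'d" where
  "loss_grad \<sigma> \<sigma>s k v w =
     - (\<Sum>p. (ccoef \<sigma> \<sigma>s p * real p) *\<^sub>R (\<Sum>j\<in>{1..k}. ((v j \<bullet> w) ^ (p - 1)) *\<^sub>R v j))"

definition standing_assms :: "(real \<Rightarrow> real) \<Rightarrow> (real \<Rightarrow> real) \<Rightarrow> bool" where
  "standing_assms \<sigma> \<sigma>s \<longleftrightarrow>
     gauss_L2 \<sigma> \<and> gauss_L2 \<sigma>s \<and>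
     hcoeff \<sigma> 0 = 0 \<and> hcoeff \<sigma>s 0 = 0 \<and>
     ccoef \<sigma> \<sigma>s (info_exp \<sigma>s) > 0 \<and>
     (\<forall>p\<ge>info_exp \<sigma>s. ccoef \<sigma> \<sigma>s p \<ge> 0) \<and>
     summable (\<lambda>p. ccoef \<sigma> \<sigma>s p * real p)"

end

theory Submission
  imports Defs
begin

lemma deriv_within_cont:
  fixes h :: "real \<Rightarrow> real"
  assumes "\<And>t. t \<ge> 0 \<Longrightarrow> (h has_real_derivative h' t) (at t within {0..})"
  shows "continuous_on {0..} h"
  using assms
  by (metis DERIV_continuous atLeast_iff continuous_on_eq_continuous_within)

lemma deriv_nonpos_mono:
  fixes h h' :: "real \<Rightarrow> real"
  assumes a0: "0 \<le> a" and ab: "a \<le> b"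
    and d: "\<And>t. a \<le> t \<Longrightarrow> t \<le> b \<Longrightarrow> (h has_real_derivative h' t) (at t within {0..})"
    and n: "\<And>t. a \<le> t \<Longrightarrow> t \<le> b \<Longrightarrow> h' t \<le> 0"
  shows "h b \<le> h a"
proof (rule DERIV_nonpos_imp_decreasing_open[OF ab])
  fix x assume x: "a < x" "x < b"
  have "at x within {0..} = at x"
    by (rule at_within_open_subset[of _ "{0<..}"]) (use x a0 in auto)
  then show "\<exists>y. (h has_real_derivative y) (at x) \<and> y \<le> 0"
    using d[of x] n[of x] x by auto
next
  have "continuous (at t within {a..b}) h" if "t \<in> {a..b}" for t
  proof -
    have "continuous (at t within {0..}) h"
      using d[of t] that DERIV_continuous by auto
    then show ?thesis
      by (rule continuous_within_subset) (use a0 in auto)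
  qed
  then show "continuous_on {a..b} h"
    by (simp add: continuous_on_eq_continuous_within)
qed

lemma gronwall_le:
  fixes x x' :: "real \<Rightarrow> real"
  assumes a0: "0 \<le> a" and ab: "a \<le> b"
    and d: "\<And>t. a \<le> t \<Longrightarrow> t \<le> b \<Longrightarrow> (x has_real_derivative x' t) (at t within {0..})"
    and n: "\<And>t. a \<le> t \<Longrightarrow> t \<le> b \<Longrightarrow> x' t \<le> C * x t"
  shows "x b \<le> x a * exp (C * (b - a))"
proof -
  let ?h = "\<lambda>t. x t * exp (- C * t)"
  have "?h b \<le> ?h a"
  proof (rule deriv_nonpos_mono[OF a0 ab, where h' = "\<lambda>t. (x' t - C * x t) * exp (- C * t)"])
    fix t assume t: "a \<le> t" "t \<le> b"
    have "((\<lambda>t. exp (- C * t)) has_real_derivative exp (- C * t) * (- C)) (at t within {0..})"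
      by (rule derivative_eq_intros refl | simp)+
    from DERIV_mult[OF d[OF t] this]
    show "(?h has_real_derivative (x' t - C * x t) * exp (- C * t)) (at t within {0..})"
      by (simp add: algebra_simps)
    show "(x' t - C * x t) * exp (- C * t) \<le> 0"
      using n[OF t] by (simp add: mult_nonpos_nonneg)
  qed
  then have "x b * exp (- C * b) * exp (C * b) \<le> x a * exp (- C * a) * exp (C * b)"
    by simp
  also have "x b * exp (- C * b) * exp (C * b) = x b"
    by (simp add: mult.assoc flip: exp_add)
  also have "x a * exp (- C * a) * exp (C * b) = x a * exp (C * (b - a))"
    by (simp add: mult.assoc right_diff_distrib flip: exp_add)
  finally show ?thesis .
qed

lemma zero_persist:
  fixes s :: "real \<Rightarrow> real"
  assumes cont: "continuous_on {0..} s" and s0: "s 0 = 0"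
    and loc: "\<And>\<tau>. \<tau> \<ge> 0 \<Longrightarrow> s \<tau> = 0 \<Longrightarrow> \<exists>\<epsilon>>0. \<forall>t. \<tau> \<le> t \<and> t \<le> \<tau> + \<epsilon> \<longrightarrow> s t = 0"
  shows "\<forall>t\<ge>0. s t = 0"
proof (rule ccontr)
  assume "\<not> ?thesis"
  then obtain t1 where t1: "t1 \<ge> 0" "s t1 \<noteq> 0" by auto
  let ?Z = "{0..t1} \<inter> s -` {0}"
  have cl: "closed ?Z"
  proof -
    have "continuous_on {0..t1} s" using cont by (rule continuous_on_subset) auto
    then show ?thesis by (rule continuous_closed_preimage) auto
  qed
  have ne: "?Z \<noteq> {}" using s0 t1 by auto
  have bd: "bdd_above ?Z" by (rule bdd_aboveI[of _ t1]) auto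
  define \<tau> where "\<tau> = Sup ?Z"
  have tZ: "\<tau> \<in> ?Z" unfolding \<tau>_def by (rule closed_contains_Sup[OF ne bd cl])
  then have t0: "\<tau> \<ge> 0" "s \<tau> = 0" "\<tau> \<le> t1" by auto
  obtain \<epsilon> where e: "\<epsilon> > 0" "\<forall>t. \<tau> \<le> t \<and> t \<le> \<tau> + \<epsilon> \<longrightarrow> s t = 0"
    using loc[OF t0(1,2)] by auto
  define t2 where "t2 = min (\<tau> + \<epsilon>) t1"
  have "t2 \<in> ?Z" using e t0 t1 unfolding t2_def by auto
  then have "t2 \<le> \<tau>" unfolding \<tau>_def by (rule cSup_upper[OF _ bd])
  then have "t2 = t1" using e unfolding t2_def by (auto simp: min_def split: if_splits)
  with \<open>t2 \<in> ?Z\<close> t1 show False by auto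
qed

lemma pos_persist:
  fixes \<phi> :: "real \<Rightarrow> real"
  assumes cont: "continuous_on {0..} \<phi>" and p0: "\<phi> 0 > 0"
    and step: "\<And>\<tau>. \<tau> \<ge> 0 \<Longrightarrow> (\<forall>t. 0 \<le> t \<and> t \<le> \<tau> \<longrightarrow> \<phi> t \<ge> 0) \<Longrightarrow> \<phi> \<tau> > 0"
  shows "\<forall>t\<ge>0. \<phi> t > 0"
proof (rule ccontr)
  assume "\<not> ?thesis"
  then obtain t1 where t1: "t1 \<ge> 0" "\<phi> t1 \<le> 0" by auto
  let ?Z = "{0..t1} \<inter> \<phi> -` {..0}"
  have c1: "continuous_on {0..t1} \<phi>" using cont by (rule continuous_on_subset) auto
  have cl: "closed ?Z"
    using c1 by (rule continuous_closed_preimage) auto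
  have ne: "?Z \<noteq> {}" using t1 by auto
  have bd: "bdd_below ?Z" by (rule bdd_belowI[of _ 0]) auto
  define \<tau> where "\<tau> = Inf ?Z"
  have tZ: "\<tau> \<in> ?Z" unfolding \<tau>_def by (rule closed_contains_Inf[OF ne bd cl])
  then have t0: "\<tau> \<ge> 0" "\<phi> \<tau> \<le> 0" "\<tau> \<le> t1" by auto
  have below: "\<phi> t > 0" if "0 \<le> t" "t < \<tau>" for t
  proof (rule ccontr)
    assume "\<not> \<phi> t > 0"
    then have "t \<in> ?Z" using that t0 by auto
    then have "\<tau> \<le> t" unfolding \<tau>_def by (rule cInf_lower[OF _ bd])
    with that show False by simp
  qed
  have "\<phi> \<tau> \<ge> 0"
  proof -
    have "continuous_on {0..\<tau>} \<phi>" using cont by (rule continuous_on_subset) auto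
    from IVT2'[of \<phi> \<tau> 0 0, OF t0(2) less_imp_le[OF p0] t0(1) this]
    obtain x where x: "0 \<le> x" "x \<le> \<tau>" "\<phi> x = 0" by auto
    then have "\<not> x < \<tau>" using below by force
    with x show ?thesis by simp
  qed
  then have "\<forall>t. 0 \<le> t \<and> t \<le> \<tau> \<longrightarrow> \<phi> t \<ge> 0"
    using below by (auto simp: le_less)
  from step[OF t0(1) this] t0 show False by simp
qed

locale core =
  fixes K c0 L a :: real and m k l :: nat and G :: "real \<Rightarrow> real"
    and U :: "nat \<Rightarrow> real \<Rightarrow> real" and S :: "real \<Rightarrow> real"
  assumes K0: "K \<ge> 0" and c0: "c0 > 0" and m1: "m \<ge> 1" and L0: "L \<ge> 0"
  and Gb: "\<And>u. \<bar>u\<bar> \<le> 1 \<Longrightarrow> \<bar>G u\<bar> \<le> K"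
  and Gm: "\<And>x y. 0 \<le> x \<Longrightarrow> x \<le> y \<Longrightarrow> y \<le> 1 \<Longrightarrow> G x + c0 * (y^m - x^m) \<le> G y"
  and G0: "0 \<le> G 0"
  and Gl: "\<And>x y. \<bar>x\<bar> \<le> 4/5 \<Longrightarrow> \<bar>y\<bar> \<le> 4/5 \<Longrightarrow> \<bar>x * G x - y * G y\<bar> \<le> L * \<bar>x - y\<bar>"
  and S_def: "\<And>t. S t = (\<Sum>j\<in>{1..k}. (U j t)^2 * G (U j t))"
  and der: "\<And>j t. j \<in> {1..k} \<Longrightarrow> t \<ge> 0 \<Longrightarrow>
      (U j has_real_derivative (U j t * (G (U j t) - S t))) (at t within {0..})"
  and sq: "\<And>t. t \<ge> 0 \<Longrightarrow> (\<Sum>j\<in>{1..k}. (U j t)^2) \<le> 1"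
  and l1: "1 \<le> l" and lk: "l \<le> k"
  and a0: "0 \<le> a"
  and top: "\<And>j. j \<in> {1..l} \<Longrightarrow> U j 0 = a"
  and low: "\<And>j. j \<in> {l+1..k} \<Longrightarrow> 0 \<le> U j 0 \<and> U j 0 < a"
begin

lemma Ubnd: assumes "j \<in> {1..k}" "t \<ge> 0" shows "\<bar>U j t\<bar> \<le> 1"
proof -
  have "(U j t)^2 \<le> (\<Sum>j\<in>{1..k}. (U j t)^2)"
    by (rule member_le_sum) (use assms in auto)
  also have "\<dots> \<le> 1" using sq assms by auto
  finally show ?thesis by (simp add: abs_square_le_1)
qed

lemma Sbnd: assumes "t \<ge> 0" shows "\<bar>S t\<bar> \<le> K"
proof -
  have "\<bar>S t\<bar> \<le> (\<Sum>j\<in>{1..k}. \<bar>(U j t)^2 * G (U j t)\<bar>)"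
    unfolding S_def by (rule sum_abs)
  also have "\<dots> \<le> (\<Sum>j\<in>{1..k}. (U j t)^2 * K)"
  proof (rule sum_mono)
    fix j assume "j \<in> {1..k}"
    then have "\<bar>G (U j t)\<bar> \<le> K" using Gb Ubnd assms by auto
    then show "\<bar>(U j t)^2 * G (U j t)\<bar> \<le> (U j t)^2 * K"
      by (simp add: abs_mult mult_left_mono)
  qed
  also have "\<dots> = K * (\<Sum>j\<in>{1..k}. (U j t)^2)"
    by (simp add: sum_distrib_left mult.commute)
  also have "\<dots> \<le> K * 1" using sq[OF assms] K0 by (intro mult_left_mono) auto
  finally show ?thesis by simp
qed

lemma Gpos: assumes "0 \<le> y" "y \<le> 1" shows "c0 * y^m \<le> G y"
  using Gm[of 0 y] assms G0 m1 by (auto simp: zero_power)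

lemma Gnn: assumes "0 \<le> y" "y \<le> 1" shows "0 \<le> G y"
  using Gpos[OF assms] c0 assms by (meson order.trans mult_nonneg_nonneg less_imp_le zero_le_power)

lemma Gmono: assumes "0 \<le> x" "x \<le> y" "y \<le> 1" shows "G x \<le> G y"
proof -
  have "x^m \<le> y^m" using assms by (simp add: power_mono)
  then have "0 \<le> c0 * (y^m - x^m)" using c0 by simp
  then show ?thesis using Gm[OF assms] by linarith
qed

lemma Ucont: assumes "j \<in> {1..k}" shows "continuous_on {0..} (U j)"
  by (rule deriv_within_cont) (use der assms in blast)

lemma UU_der: assumes "j \<in> {1..k}" "t \<ge> 0"
  shows "((\<lambda>t. U j t * U j t) has_real_derivative 2 * (U j t * U j t) * (G (U j t) - S t)) (at t within {0..})"
  using DERIV_mult[OF der[OF assms] der[OF assms]] by (simp add: algebra_simps)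

lemma zero_stays: assumes j: "j \<in> {1..k}" and z: "U j 0 = 0" and t: "t \<ge> 0"
  shows "U j t = 0"
proof -
  have "U j t * U j t \<le> U j 0 * U j 0 * exp ((4 * K) * (t - 0))"
  proof (rule gronwall_le[where x' = "\<lambda>t. 2 * (U j t * U j t) * (G (U j t) - S t)"])
    show "0 \<le> (0::real)" "0 \<le> t" using t by auto
    fix s assume s: "0 \<le> s" "s \<le> t"
    show "((\<lambda>t. U j t * U j t) has_real_derivative 2 * (U j s * U j s) * (G (U j s) - S s)) (at s within {0..})"
      using UU_der[OF j s(1)] .
    have "\<bar>G (U j s)\<bar> \<le> K" using Gb Ubnd[OF j s(1)] by auto
    moreover have "\<bar>S s\<bar> \<le> K" using Sbnd s by auto
    moreover have "0 \<le> U j s * U j s" by simp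
    ultimately have "G (U j s) - S s \<le> 2 * K" by linarith
    from mult_left_mono[OF this \<open>0 \<le> U j s * U j s\<close>]
    show "2 * (U j s * U j s) * (G (U j s) - S s) \<le> (4 * K) * (U j s * U j s)"
      by (simp add: algebra_simps)
  qed
  then have "U j t * U j t \<le> 0" using z by simp
  then show ?thesis by (metis mult_le_0_iff linorder_not_le order_antisym zero_le_square)
qed

lemma pos_stays: assumes j: "j \<in> {1..k}" and p: "U j 0 > 0" and t: "t \<ge> 0"
  shows "U j t > 0"
proof -
  have sq_pos: "U j s \<noteq> 0" if s: "s \<ge> 0" for s
  proof -
    have "- (U j s * U j s) \<le> - (U j 0 * U j 0) * exp ((- 4 * K) * (s - 0))"
    proof (rule gronwall_le[where x' = "\<lambda>t. - (2 * (U j t * U j t) * (G (U j t) - S t))"])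
      show "0 \<le> (0::real)" "0 \<le> s" using s by auto
      fix r assume r: "0 \<le> r" "r \<le> s"
      show "((\<lambda>t. - (U j t * U j t)) has_real_derivative - (2 * (U j r * U j r) * (G (U j r) - S r))) (at r within {0..})"
        using DERIV_minus[OF UU_der[OF j r(1)]] .
      have "\<bar>G (U j r)\<bar> \<le> K" using Gb Ubnd[OF j r(1)] by auto
      moreover have "\<bar>S r\<bar> \<le> K" using Sbnd r by auto
      moreover have "0 \<le> U j r * U j r" by simp
      ultimately have "- (G (U j r) - S r) \<le> 2 * K" by linarith
      from mult_left_mono[OF this \<open>0 \<le> U j r * U j r\<close>]
      show "- (2 * (U j r * U j r) * (G (U j r) - S r)) \<le> (- 4 * K) * - (U j r * U j r)"
        by (simp add: algebra_simps)
    qed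
    then have "U j 0 * U j 0 * exp ((- 4 * K) * (s - 0)) \<le> U j s * U j s" by simp
    moreover have "U j 0 * U j 0 * exp ((- 4 * K) * (s - 0)) > 0" using p by simp
    ultimately show ?thesis by auto
  qed
  show ?thesis
  proof (rule ccontr)
    assume "\<not> U j t > 0"
    have "continuous_on {0..t} (U j)" using Ucont[OF j] by (rule continuous_on_subset) auto
    from IVT2'[of "U j" t 0 0, OF _ _ t this] \<open>\<not> U j t > 0\<close> p
    obtain x where "0 \<le> x" "U j x = 0" by auto
    with sq_pos show False by auto
  qed
qed

end

context core begin

lemma U1pos: assumes "a > 0" "t \<ge> 0" shows "U 1 t > 0"
  using pos_stays[of 1 t] top[of 1] assms l1 lk by auto

lemma eq_top: assumes apos: "a > 0" and j: "j \<in> {1..l}" and t: "t \<ge> 0"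
  shows "U j t = U 1 t"
proof (cases "j = 1")
  case True then show ?thesis by simp
next
  case False
  have jk: "j \<in> {1..k}" and ok: "1 \<in> {1..k}" using j lk l1 by auto
  let ?d = "\<lambda>t. U j t - U 1 t"
  have "\<forall>t\<ge>0. ?d t = 0"
  proof (rule zero_persist)
    show "continuous_on {0..} ?d" using Ucont[OF jk] Ucont[OF ok] by (intro continuous_on_diff)
    show "?d 0 = 0" using top[OF j] top[of 1] l1 by auto
  next
    fix \<tau> :: real assume \<tau>: "\<tau> \<ge> 0" "?d \<tau> = 0"
    have "(U j \<tau>)^2 + (U 1 \<tau>)^2 = (\<Sum>i\<in>{j,1}. (U i \<tau>)^2)" using False by simp
    also have "\<dots> \<le> (\<Sum>i\<in>{1..k}. (U i \<tau>)^2)"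
      by (rule sum_mono2) (use jk ok in auto)
    also have "\<dots> \<le> 1" using sq \<tau> by auto
    finally have "2 * (U 1 \<tau>)^2 \<le> 1" using \<tau> by simp
    then have "(U 1 \<tau>)^2 \<le> (3/4)^2" by (simp add: power2_eq_square)
    then have b1: "\<bar>U 1 \<tau>\<bar> \<le> 3/4" using abs_le_square_iff[of "U 1 \<tau>" "3/4"] by simp
    have bj: "\<bar>U j \<tau>\<bar> \<le> 3/4" using b1 \<tau> by simp
    have cj: "continuous (at \<tau> within {0..}) (U j)" and c1: "continuous (at \<tau> within {0..}) (U 1)"
      using der[OF jk \<tau>(1)] der[OF ok \<tau>(1)] DERIV_continuous by auto
    obtain e1 where e1: "e1 > 0" "\<forall>x'\<in>{0..}. dist x' \<tau> < e1 \<longrightarrow> dist (U j x') (U j \<tau>) < 1/20"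
      using cj unfolding continuous_within_eps_delta by (meson divide_pos_pos zero_less_numeral zero_less_one)
    obtain e2 where e2: "e2 > 0" "\<forall>x'\<in>{0..}. dist x' \<tau> < e2 \<longrightarrow> dist (U 1 x') (U 1 \<tau>) < 1/20"
      using c1 unfolding continuous_within_eps_delta by (meson divide_pos_pos zero_less_numeral zero_less_one)
    define \<epsilon> where "\<epsilon> = min e1 e2 / 2"
    have eps: "\<epsilon> > 0" using e1 e2 by (simp add: \<epsilon>_def)
    have near: "\<bar>U j s\<bar> \<le> 4/5 \<and> \<bar>U 1 s\<bar> \<le> 4/5" if "\<tau> \<le> s" "s \<le> \<tau> + \<epsilon>" for s
    proof -
      have "s \<in> {0..}" "dist s \<tau> < e1" "dist s \<tau> < e2"
        using that \<tau> e1 e2 by (auto simp: \<epsilon>_def dist_real_def)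
      then have "\<bar>U j s - U j \<tau>\<bar> < 1/20" "\<bar>U 1 s - U 1 \<tau>\<bar> < 1/20"
        using e1 e2 by (auto simp: dist_real_def)
      then show ?thesis using b1 bj by linarith
    qed
    show "\<exists>\<epsilon>>0. \<forall>t. \<tau> \<le> t \<and> t \<le> \<tau> + \<epsilon> \<longrightarrow> ?d t = 0"
    proof (intro exI[of _ \<epsilon>] conjI allI impI)
      show "\<epsilon> > 0" by (rule eps)
      fix t assume t: "\<tau> \<le> t \<and> t \<le> \<tau> + \<epsilon>"
      have "?d t * ?d t \<le> ?d \<tau> * ?d \<tau> * exp ((2 * L + 2 * K) * (t - \<tau>))"
      proof (rule gronwall_le[where x' = "\<lambda>t. 2 * ?d t * ((U j t * G (U j t) - U 1 t * G (U 1 t)) - S t * ?d t)"])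
        show "0 \<le> \<tau>" "\<tau> \<le> t" using \<tau> t by auto
        fix s assume s: "\<tau> \<le> s" "s \<le> t"
        have s0: "s \<ge> 0" using s \<tau> by auto
        have dd: "(?d has_real_derivative (U j s * (G (U j s) - S s) - U 1 s * (G (U 1 s) - S s))) (at s within {0..})"
          using DERIV_diff[OF der[OF jk s0] der[OF ok s0]] .
        show "((\<lambda>t. ?d t * ?d t) has_real_derivative 2 * ?d s * ((U j s * G (U j s) - U 1 s * G (U 1 s)) - S s * ?d s)) (at s within {0..})"
          using DERIV_mult[OF dd dd] by (simp add: algebra_simps)
        have nb: "\<bar>U j s\<bar> \<le> 4/5" "\<bar>U 1 s\<bar> \<le> 4/5" using near[of s] s t by auto
        have lip: "\<bar>U j s * G (U j s) - U 1 s * G (U 1 s)\<bar> \<le> L * \<bar>?d s\<bar>" using Gl[OF nb] .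
        have Sb: "\<bar>S s\<bar> \<le> K" using Sbnd s0 .
        have "2 * ?d s * (U j s * G (U j s) - U 1 s * G (U 1 s)) \<le> 2 * \<bar>?d s\<bar> * \<bar>U j s * G (U j s) - U 1 s * G (U 1 s)\<bar>"
          by (metis abs_ge_self abs_mult abs_of_nonneg mult.assoc mult_left_mono zero_le_numeral)
        also have "\<dots> \<le> 2 * \<bar>?d s\<bar> * (L * \<bar>?d s\<bar>)"
          by (rule mult_left_mono[OF lip]) simp
        finally have i1: "2 * ?d s * (U j s * G (U j s) - U 1 s * G (U 1 s)) \<le> 2 * L * (?d s * ?d s)"
          by (simp add: algebra_simps abs_mult_self_eq)
        have "- (2 * ?d s * (S s * ?d s)) = (- S s) * (2 * (?d s * ?d s))" by (simp add: algebra_simps)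
        also have "\<dots> \<le> K * (2 * (?d s * ?d s))"
          by (rule mult_right_mono) (use Sb in auto)
        finally have i2: "- (2 * ?d s * (S s * ?d s)) \<le> 2 * K * (?d s * ?d s)" by simp
        show "2 * ?d s * ((U j s * G (U j s) - U 1 s * G (U 1 s)) - S s * ?d s) \<le> (2 * L + 2 * K) * (?d s * ?d s)"
          using i1 i2 by (simp add: algebra_simps)
      qed
      then have "?d t * ?d t \<le> 0" using \<tau> by simp
      then show "?d t = 0" by (metis mult_le_0_iff linorder_not_le order_antisym zero_le_square)
    qed
  qed
  then show ?thesis using t by auto
qed

end

lemma exp_decay: "(\<gamma>::real) > 0 \<Longrightarrow> ((\<lambda>t. C * exp (- \<gamma> * t)) \<longlongrightarrow> 0) at_top"
proof -
  assume g: "\<gamma> > 0"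
  have "filterlim (\<lambda>t::real. \<gamma> * t) at_top at_top"
    by (rule filterlim_tendsto_pos_mult_at_top[OF tendsto_const g filterlim_ident])
  then have "filterlim (\<lambda>t::real. - (\<gamma> * t)) at_bot at_top"
    by (simp add: filterlim_uminus_at_top)
  then have "filterlim (\<lambda>t::real. - \<gamma> * t) at_bot at_top" by simp
  then have "((\<lambda>t. exp (- \<gamma> * t)) \<longlongrightarrow> 0) at_top"
    by (rule filterlim_compose[OF exp_at_bot])
  then show ?thesis by (rule tendsto_mult_right_zero)
qed

context core begin

lemma ratio: assumes apos: "a > 0" and i: "i \<in> {l+1..k}" and pi: "U i 0 > 0"
  shows "\<forall>t\<ge>0. U i t < U 1 t"
    and "\<And>s t. 0 \<le> s \<Longrightarrow> s \<le> t \<Longrightarrow> U i t / U 1 t \<le> U i s / U 1 s"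
    and "\<And>t. t \<ge> 0 \<Longrightarrow> ((\<lambda>t. U i t / U 1 t) has_real_derivative
            (U i t / U 1 t) * (G (U i t) - G (U 1 t))) (at t within {0..})"
proof -
  have ik: "i \<in> {1..k}" and ok: "1 \<in> {1..k}" using i lk l1 by auto
  define \<rho> where "\<rho> t = U i t / U 1 t" for t
  have U1p: "U 1 t > 0" if "t \<ge> 0" for t using U1pos[OF apos that] .
  have Uip: "U i t > 0" if "t \<ge> 0" for t using pos_stays[OF ik pi that] .
  have rd: "(\<rho> has_real_derivative \<rho> t * (G (U i t) - G (U 1 t))) (at t within {0..})" if t: "t \<ge> 0" for t
  proof -
    have ne: "U 1 t \<noteq> 0" using U1p[OF t] by simp
    from DERIV_divide[OF der[OF ik t] der[OF ok t] ne]
    have "(\<rho> has_real_derivative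
      (U i t * (G (U i t) - S t) * U 1 t - U i t * (U 1 t * (G (U 1 t) - S t))) / (U 1 t * U 1 t))
      (at t within {0..})" unfolding \<rho>_def .
    moreover have "(U i t * (G (U i t) - S t) * U 1 t - U i t * (U 1 t * (G (U 1 t) - S t))) / (U 1 t * U 1 t)
       = \<rho> t * (G (U i t) - G (U 1 t))"
      using ne unfolding \<rho>_def by (simp add: field_simps)
    ultimately show ?thesis by simp
  qed
  then show "\<And>t. t \<ge> 0 \<Longrightarrow> ((\<lambda>t. U i t / U 1 t) has_real_derivative
            (U i t / U 1 t) * (G (U i t) - G (U 1 t))) (at t within {0..})"
    unfolding \<rho>_def by blast
  have rcont: "continuous_on {0..} \<rho>" by (rule deriv_within_cont[OF rd])
  have dnp: "\<rho> t * (G (U i t) - G (U 1 t)) \<le> 0" if t: "t \<ge> 0" and le: "\<rho> t \<le> 1" for t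
  proof -
    have "U i t \<le> U 1 t" using le U1p[OF t] unfolding \<rho>_def by (simp add: divide_le_eq)
    moreover have "U 1 t \<le> 1" using Ubnd[OF ok t] by simp
    ultimately have "G (U i t) \<le> G (U 1 t)" using Gmono Uip[OF t] by (simp add: less_imp_le)
    moreover have "\<rho> t \<ge> 0" using Uip[OF t] U1p[OF t] unfolding \<rho>_def by simp
    ultimately show ?thesis by (simp add: mult_nonneg_nonpos)
  qed
  have r0: "\<rho> 0 < 1" using low[OF i] top[of 1] l1 apos unfolding \<rho>_def by simp
  have lt1: "\<forall>t\<ge>0. 1 - \<rho> t > 0"
  proof (rule pos_persist)
    show "continuous_on {0..} (\<lambda>t. 1 - \<rho> t)" using rcont by (intro continuous_on_diff continuous_on_const)
    show "1 - \<rho> 0 > 0" using r0 by simp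
    fix \<tau> :: real assume \<tau>: "\<tau> \<ge> 0" "\<forall>t. 0 \<le> t \<and> t \<le> \<tau> \<longrightarrow> 1 - \<rho> t \<ge> 0"
    have "\<rho> \<tau> \<le> \<rho> 0"
      by (rule deriv_nonpos_mono[OF order_refl \<tau>(1) rd dnp]) (use \<tau> in auto)
    then show "1 - \<rho> \<tau> > 0" using r0 by simp
  qed
  show "\<forall>t\<ge>0. U i t < U 1 t"
  proof (intro allI impI)
    fix t :: real assume t: "t \<ge> 0"
    then have "\<rho> t < 1" using lt1 by auto
    then show "U i t < U 1 t" using U1p[OF t] unfolding \<rho>_def by (simp add: divide_less_eq)
  qed
  show "U i t / U 1 t \<le> U i s / U 1 s" if "0 \<le> s" "s \<le> t" for s t
  proof -
    have "\<rho> t \<le> \<rho> s"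
      by (rule deriv_nonpos_mono[OF that rd dnp]) (use that lt1 in \<open>auto simp: less_imp_le\<close>)
    then show ?thesis unfolding \<rho>_def .
  qed
qed

lemma ord: assumes apos: "a > 0" and j: "j \<in> {1..k}" and t: "t \<ge> 0"
  shows "0 \<le> U j t \<and> U j t \<le> U 1 t"
proof -
  have U1p: "U 1 t > 0" using U1pos[OF apos t] .
  show ?thesis
  proof (cases "j \<le> l")
    case True
    then show ?thesis using eq_top[OF apos _ t, of j] j U1p by auto
  next
    case False
    then have ji: "j \<in> {l+1..k}" using j by auto
    show ?thesis
    proof (cases "U j 0 = 0")
      case True
      then show ?thesis using zero_stays[OF j True t] U1p by simp
    next
      case False
      then have "U j 0 > 0" using low[OF ji] by simp
      then show ?thesis using ratio(1)[OF apos ji] pos_stays[OF j _ t] t by (auto simp: less_imp_le)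
    qed
  qed
qed

lemma U1_ge: assumes apos: "a > 0" and t: "t \<ge> 0" shows "a \<le> U 1 t"
proof -
  have ok: "1 \<in> {1..k}" using l1 lk by auto
  have "- U 1 t \<le> - U 1 0"
  proof (rule deriv_nonpos_mono[OF order_refl t, where h' = "\<lambda>t. - (U 1 t * (G (U 1 t) - S t))"])
    fix s assume s: "0 \<le> s" "s \<le> t"
    show "((\<lambda>t. - U 1 t) has_real_derivative - (U 1 s * (G (U 1 s) - S s))) (at s within {0..})"
      using DERIV_minus[OF der[OF ok s(1)]] .
    have u1: "0 < U 1 s" "U 1 s \<le> 1" using U1pos[OF apos s(1)] Ubnd[OF ok s(1)] by auto
    have "S s \<le> (\<Sum>j\<in>{1..k}. (U j s)^2 * G (U 1 s))"
      unfolding S_def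
    proof (rule sum_mono)
      fix j assume j: "j \<in> {1..k}"
      have "G (U j s) \<le> G (U 1 s)" using ord[OF apos j s(1)] u1 by (intro Gmono) auto
      then show "(U j s)^2 * G (U j s) \<le> (U j s)^2 * G (U 1 s)" by (simp add: mult_left_mono)
    qed
    also have "\<dots> = G (U 1 s) * (\<Sum>j\<in>{1..k}. (U j s)^2)" by (simp add: sum_distrib_left mult.commute)
    also have "\<dots> \<le> G (U 1 s) * 1" using sq[OF s(1)] Gnn[of "U 1 s"] u1 by (intro mult_left_mono) auto
    finally have "S s \<le> G (U 1 s)" by simp
    then show "- (U 1 s * (G (U 1 s) - S s)) \<le> 0" using u1 by simp
  qed
  then show ?thesis using top[of 1] l1 by simp
qed

end

context core begin

lemma q_lim: assumes apos: "a > 0"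
  shows "((\<lambda>t. 1 - (\<Sum>j\<in>{1..k}. (U j t)^2)) \<longlongrightarrow> 0) at_top"
proof -
  have ok: "1 \<in> {1..k}" using l1 lk by auto
  define q where "q t = 1 - (\<Sum>j\<in>{1..k}. U j t * U j t)" for t
  define \<sigma> where "\<sigma> = a^2 * (c0 * a^m)"
  have sp: "\<sigma> > 0" using apos c0 unfolding \<sigma>_def by simp
  have qn: "q t \<ge> 0" if "t \<ge> 0" for t using sq[OF that] unfolding q_def by (simp add: power2_eq_square)
  have Slow: "\<sigma> \<le> S t" if t: "t \<ge> 0" for t
  proof -
    have u1: "a \<le> U 1 t" "U 1 t \<le> 1" using U1_ge[OF apos t] Ubnd[OF ok t] by auto
    have "a^2 \<le> (U 1 t)^2" using u1 apos by (simp add: power_mono)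
    moreover have "c0 * a^m \<le> G (U 1 t)"
    proof -
      have "c0 * a^m \<le> c0 * (U 1 t)^m" using u1 apos c0 by (simp add: power_mono)
      also have "\<dots> \<le> G (U 1 t)" using Gpos u1 apos by simp
      finally show ?thesis .
    qed
    ultimately have "\<sigma> \<le> (U 1 t)^2 * G (U 1 t)"
      unfolding \<sigma>_def using apos c0 by (intro mult_mono) auto
    also have "\<dots> \<le> S t" unfolding S_def
    proof (rule member_le_sum[OF ok])
      fix j assume "j \<in> {1..k} - {1}"
      then have j: "j \<in> {1..k}" by auto
      have "0 \<le> G (U j t)" using ord[OF apos j t] Ubnd[OF j t] by (intro Gnn) auto
      then show "0 \<le> (U j t)^2 * G (U j t)" by simp
    qed auto
    finally show ?thesis .
  qed
  have qd: "(q has_real_derivative - 2 * S t * q t) (at t within {0..})" if t: "t \<ge> 0" for t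
  proof -
    have "((\<lambda>t. \<Sum>j\<in>{1..k}. U j t * U j t) has_real_derivative
        (\<Sum>j\<in>{1..k}. 2 * (U j t * U j t) * (G (U j t) - S t))) (at t within {0..})"
      by (rule DERIV_sum) (use UU_der t in auto)
    from DERIV_diff[OF DERIV_const[of 1] this]
    have "(q has_real_derivative 0 - (\<Sum>j\<in>{1..k}. 2 * (U j t * U j t) * (G (U j t) - S t))) (at t within {0..})"
      unfolding q_def .
    moreover have "(\<Sum>j\<in>{1..k}. 2 * (U j t * U j t) * (G (U j t) - S t))
        = 2 * (\<Sum>j\<in>{1..k}. (U j t)^2 * G (U j t)) - 2 * S t * (\<Sum>j\<in>{1..k}. U j t * U j t)"
      by (simp add: sum_subtractf sum_distrib_left algebra_simps power2_eq_square)
    moreover have "(\<Sum>j\<in>{1..k}. (U j t)^2 * G (U j t)) = S t" by (simp add: S_def)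
    ultimately have "(q has_real_derivative 0 - (2 * S t - 2 * S t * (\<Sum>j\<in>{1..k}. U j t * U j t))) (at t within {0..})"
      by simp
    moreover have "0 - (2 * S t - 2 * S t * (\<Sum>j\<in>{1..k}. U j t * U j t)) = - 2 * S t * q t"
      unfolding q_def by (simp add: algebra_simps)
    ultimately show ?thesis by simp
  qed
  have qb: "q t \<le> q 0 * exp (- (2 * \<sigma>) * t)" if t: "t \<ge> 0" for t
  proof -
    have "q t \<le> q 0 * exp ((- (2 * \<sigma>)) * (t - 0))"
    proof (rule gronwall_le[OF order_refl t qd])
      fix s assume s: "0 \<le> s" "s \<le> t"
      have "\<sigma> * q s \<le> S s * q s" using Slow[OF s(1)] qn[OF s(1)] by (rule mult_right_mono)
      then show "- 2 * S s * q s \<le> - (2 * \<sigma>) * q s" by simp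
    qed
    then show ?thesis by simp
  qed
  have "(q \<longlongrightarrow> 0) at_top"
  proof (rule tendsto_sandwich[OF _ _ tendsto_const exp_decay[of "2 * \<sigma>" "q 0"]])
    show "\<forall>\<^sub>F t in at_top. 0 \<le> q t" using eventually_ge_at_top[of 0] by eventually_elim (rule qn)
    show "\<forall>\<^sub>F t in at_top. q t \<le> q 0 * exp (- (2 * \<sigma>) * t)"
      using eventually_ge_at_top[of 0] by eventually_elim (rule qb)
    show "0 < 2 * \<sigma>" using sp by simp
  qed
  then show ?thesis unfolding q_def by (simp add: power2_eq_square)
qed

lemma low_lim: assumes apos: "a > 0" and i: "i \<in> {l+1..k}"
  shows "(U i \<longlongrightarrow> 0) at_top"
proof (cases "U i 0 = 0")
  case True
  have ik: "i \<in> {1..k}" using i l1 by auto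
  have "\<forall>\<^sub>F t in at_top. 0 = U i t"
    using eventually_ge_at_top[of 0] by eventually_elim (use zero_stays[OF ik True] in auto)
  from tendsto_cong[OF this, of 0] show ?thesis by (simp add: tendsto_const)
next
  case False
  have ik: "i \<in> {1..k}" and ok: "1 \<in> {1..k}" using i lk l1 by auto
  have pi: "U i 0 > 0" using False low[OF i] by simp
  define \<rho> where "\<rho> t = U i t / U 1 t" for t
  define \<rho>0 where "\<rho>0 = \<rho> 0"
  have r0: "0 \<le> \<rho>0" "\<rho>0 < 1" using low[OF i] top[of 1] l1 apos unfolding \<rho>0_def \<rho>_def by auto
  define \<gamma> where "\<gamma> = c0 * a^m * (1 - \<rho>0^m)"
  have "\<rho>0^m < 1^m" using r0 m1 by (intro power_strict_mono) auto
  then have gp: "\<gamma> > 0" using c0 apos unfolding \<gamma>_def by simp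
  have rn: "0 \<le> \<rho> t" if "t \<ge> 0" for t
    using pos_stays[OF ik pi that] U1pos[OF apos that] unfolding \<rho>_def by simp
  have rb: "\<rho> t \<le> \<rho> 0 * exp (- \<gamma> * t)" if t: "t \<ge> 0" for t
  proof -
    have "\<rho> t \<le> \<rho> 0 * exp ((- \<gamma>) * (t - 0))"
    proof (rule gronwall_le[OF order_refl t])
      fix s assume s: "0 \<le> s" "s \<le> t"
      show "(\<rho> has_real_derivative \<rho> s * (G (U i s) - G (U 1 s))) (at s within {0..})"
        unfolding \<rho>_def by (rule ratio(3)[OF apos i pi s(1)])
      have u1: "a \<le> U 1 s" "U 1 s \<le> 1" "0 < U 1 s" using U1_ge[OF apos s(1)] Ubnd[OF ok s(1)] U1pos[OF apos s(1)] by auto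
      have ui: "0 \<le> U i s" "U i s \<le> U 1 s" using ord[OF apos ik s(1)] by auto
      have rs: "\<rho> s \<le> \<rho>0" using ratio(2)[OF apos i pi order_refl s(1)] unfolding \<rho>0_def \<rho>_def .
      have Uis: "U i s = \<rho> s * U 1 s" using u1 unfolding \<rho>_def by simp
      have g1: "G (U i s) + c0 * ((U 1 s)^m - (U i s)^m) \<le> G (U 1 s)" using Gm ui u1 by simp
      have "(U 1 s)^m - (U i s)^m = (U 1 s)^m * (1 - (\<rho> s)^m)"
        by (simp add: Uis power_mult_distrib algebra_simps)
      also have "\<dots> \<ge> a^m * (1 - \<rho>0^m)"
      proof (rule mult_mono)
        show "a^m \<le> (U 1 s)^m" using u1 apos by (simp add: power_mono)
        show "1 - \<rho>0^m \<le> 1 - (\<rho> s)^m" using rs rn[OF s(1)] by (simp add: power_mono)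
        show "0 \<le> (U 1 s)^m" using u1 by simp
        show "0 \<le> 1 - \<rho>0^m" using \<open>\<rho>0^m < 1^m\<close> by simp
      qed
      finally have "\<gamma> \<le> c0 * ((U 1 s)^m - (U i s)^m)" unfolding \<gamma>_def using c0
        by (simp add: mult.assoc mult_left_mono)
      then have "\<gamma> \<le> G (U 1 s) - G (U i s)" using g1 by simp
      then have "\<rho> s * \<gamma> \<le> \<rho> s * (G (U 1 s) - G (U i s))" using rn[OF s(1)] by (rule mult_left_mono)
      then show "\<rho> s * (G (U i s) - G (U 1 s)) \<le> - \<gamma> * \<rho> s" by (simp add: algebra_simps)
    qed
    then show ?thesis by simp
  qed
  show ?thesis
  proof (rule tendsto_sandwich[OF _ _ tendsto_const exp_decay[OF gp, of "\<rho> 0"]])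
    show "\<forall>\<^sub>F t in at_top. 0 \<le> U i t"
      using eventually_ge_at_top[of 0] by eventually_elim (use ord[OF apos ik] in auto)
    show "\<forall>\<^sub>F t in at_top. U i t \<le> \<rho> 0 * exp (- \<gamma> * t)"
      using eventually_ge_at_top[of 0]
    proof eventually_elim
      case (elim t)
      have u1: "U 1 t \<le> 1" "0 < U 1 t" using Ubnd[OF ok elim] U1pos[OF apos elim] by auto
      have "U i t = \<rho> t * U 1 t" using u1 unfolding \<rho>_def by simp
      also have "\<dots> \<le> \<rho> t" using u1 rn[OF elim] by (simp add: mult_left_le)
      finally show ?case using rb[OF elim] by simp
    qed
  qed
qed

lemma top_lim: assumes apos: "a > 0" and j: "j \<in> {1..l}"
  shows "(U j \<longlongrightarrow> 1 / sqrt (real l)) at_top"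
proof -
  have ok: "1 \<in> {1..k}" using l1 lk by auto
  define T where "T t = (\<Sum>i\<in>{l+1..k}. (U i t)^2)" for t
  have Tl: "(T \<longlongrightarrow> 0) at_top"
  proof -
    have "((\<lambda>t. \<Sum>i\<in>{l+1..k}. (U i t)^2) \<longlongrightarrow> (\<Sum>i\<in>{l+1..k}. 0^2)) at_top"
      by (intro tendsto_sum tendsto_power low_lim[OF apos]) 
    then show ?thesis unfolding T_def by simp
  qed
  have split: "(\<Sum>j\<in>{1..k}. (U j t)^2) = (\<Sum>j\<in>{1..l}. (U j t)^2) + T t" for t
  proof -
    have "{1..k} = {1..l} \<union> {l+1..k}" using lk by auto
    then show ?thesis unfolding T_def by (simp add: sum.union_disjoint)
  qed
  have ev: "\<forall>\<^sub>F t in at_top. (U 1 t)^2 = (1 - (1 - (\<Sum>j\<in>{1..k}. (U j t)^2)) - T t) / real l"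
    using eventually_ge_at_top[of 0]
  proof eventually_elim
    case (elim t)
    have "(\<Sum>j\<in>{1..l}. (U j t)^2) = (\<Sum>j\<in>{1..l}. (U 1 t)^2)"
    proof (rule sum.cong)
      fix j assume "j \<in> {1..l}"
      from eq_top[OF apos this elim] show "(U j t)^2 = (U 1 t)^2" by simp
    qed simp
    then have "(\<Sum>j\<in>{1..l}. (U j t)^2) = real l * (U 1 t)^2" by simp
    then have "(\<Sum>j\<in>{1..k}. (U j t)^2) = real l * (U 1 t)^2 + T t" using split[of t] by simp
    then show ?case using l1 by simp
  qed
  have "((\<lambda>t. (1 - (1 - (\<Sum>j\<in>{1..k}. (U j t)^2)) - T t) / real l) \<longlongrightarrow> (1 - 0 - 0) / real l) at_top"
    by (intro tendsto_divide tendsto_diff tendsto_const q_lim[OF apos] Tl) (use l1 in auto)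
  then have "((\<lambda>t. (U 1 t)^2) \<longlongrightarrow> 1 / real l) at_top"
    using tendsto_cong[OF ev] by simp
  then have lim1: "((\<lambda>t. sqrt ((U 1 t)^2)) \<longlongrightarrow> sqrt (1 / real l)) at_top" by (rule tendsto_real_sqrt)
  have ev2: "\<forall>\<^sub>F t in at_top. sqrt ((U 1 t)^2) = U j t"
    using eventually_ge_at_top[of 0]
  proof eventually_elim
    case (elim t)
    have "U j t = U 1 t" by (rule eq_top[OF apos j elim])
    then show ?case using U1pos[OF apos elim] by simp
  qed
  have "(U j \<longlongrightarrow> sqrt (1 / real l)) at_top"
    using tendsto_cong[OF ev2] lim1 by simp
  then show ?thesis by (simp add: real_sqrt_divide)
qed

lemma core_result:
  "(\<forall>j\<in>{1..l}. (U j \<longlongrightarrow> (if a > 0 then 1 / sqrt (real l) else 0)) at_top) \<and>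
   (\<forall>j\<in>{l+1..k}. (U j \<longlongrightarrow> 0) at_top)"
proof (cases "a > 0")
  case True
  then show ?thesis using top_lim low_lim by auto
next
  case False
  then have a: "a = 0" using a0 by simp
  have I: "{l+1..k} = {}"
  proof (rule ccontr)
    assume "{l+1..k} \<noteq> {}"
    then obtain i where "i \<in> {l+1..k}" by blast
    from low[OF this] a show False by linarith
  qed
  have "(U j \<longlongrightarrow> 0) at_top" if j: "j \<in> {1..l}" for j
  proof -
    have jk: "j \<in> {1..k}" using j lk by auto
    have "\<forall>\<^sub>F t in at_top. 0 = U j t"
      using eventually_ge_at_top[of 0] by eventually_elim (use zero_stays[OF jk] top[OF j] a in auto)
    from tendsto_cong[OF this, of 0] show ?thesis by (simp add: tendsto_const)
  qed
  then show ?thesis using I False by auto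
qed

end

locale vec =
  fixes \<sigma> \<sigma>s :: "real \<Rightarrow> real" and k :: nat and v :: "nat \<Rightarrow> real^'d" and w :: "real \<Rightarrow> real^'d"
  assumes standing: "standing_assms \<sigma> \<sigma>s"
  and orth: "\<forall>i\<in>{1..k}. \<forall>j\<in>{1..k}. v i \<bullet> v j = (if i = j then 1 else 0)"
  and ode: "\<forall>t\<ge>0. (w has_vector_derivative
               (- (loss_grad \<sigma> \<sigma>s k v (w t) - (w t \<bullet> loss_grad \<sigma> \<sigma>s k v (w t)) *\<^sub>R w t)))
               (at t within {0..})"
  and unit0: "norm (w 0) = 1"
begin

abbreviation "c \<equiv> ccoef \<sigma> \<sigma>s"
abbreviation "P \<equiv> info_exp \<sigma>s"
abbreviation "lg \<equiv> loss_grad \<sigma> \<sigma>s k v"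

definition "Kc = (\<Sum>p. c p * real p)"

lemma c_zero_below: "p < P \<Longrightarrow> c p = 0"
  unfolding ccoef_def info_exp_def using not_less_Least by fastforce

lemma c_nonneg: "0 \<le> c p"
  using standing c_zero_below unfolding standing_assms_def by (cases "p < P") auto

lemma cP_pos: "c P > 0" using standing unfolding standing_assms_def by auto

lemma summ_cp: "summable (\<lambda>p. c p * real p)" using standing unfolding standing_assms_def by auto

lemma cp_le_K: "c p * real p \<le> Kc"
proof -
  have "sum (\<lambda>p. c p * real p) {p} \<le> Kc" unfolding Kc_def
    by (rule sum_le_suminf[OF summ_cp]) (auto simp: c_nonneg)
  then show ?thesis by simp
qed

lemma Kc_nonneg: "0 \<le> Kc" using cp_le_K[of 0] by simp

lemma vnorm: "j \<in> {1..k} \<Longrightarrow> norm (v j) = 1"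
  using orth by (simp add: norm_eq_sqrt_inner)

lemma inner_comb: assumes "i \<in> {1..k}"
  shows "v i \<bullet> (\<Sum>j\<in>{1..k}. b j *\<^sub>R v j) = b i"
proof -
  have "v i \<bullet> (\<Sum>j\<in>{1..k}. b j *\<^sub>R v j) = (\<Sum>j\<in>{1..k}. b j * (v i \<bullet> v j))"
    by (simp add: inner_sum_right)
  also have "\<dots> = (\<Sum>j\<in>{1..k}. if i = j then b j else 0)"
    using orth assms by (intro sum.cong) auto
  also have "\<dots> = b i" using assms by simp
  finally show ?thesis .
qed

lemma ubnd: "j \<in> {1..k} \<Longrightarrow> \<bar>v j \<bullet> x\<bar> \<le> norm x"
  using Cauchy_Schwarz_ineq2[of "v j" x] vnorm by simp

definition "Tm p x = (c p * real p) *\<^sub>R (\<Sum>j\<in>{1..k}. ((v j \<bullet> x) ^ (p - 1)) *\<^sub>R v j)"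

lemma lg_Tm: "lg x = - suminf (\<lambda>p. Tm p x)"
  unfolding loss_grad_def Tm_def ..

lemma Tm_norm: "norm (Tm p x) \<le> c p * real p * (\<Sum>j\<in>{1..k}. \<bar>v j \<bullet> x\<bar> ^ (p - 1))"
proof -
  have "norm (\<Sum>j\<in>{1..k}. ((v j \<bullet> x) ^ (p - 1)) *\<^sub>R v j) \<le> (\<Sum>j\<in>{1..k}. norm (((v j \<bullet> x) ^ (p - 1)) *\<^sub>R v j))"
    by (rule norm_sum)
  also have "\<dots> = (\<Sum>j\<in>{1..k}. \<bar>v j \<bullet> x\<bar> ^ (p - 1))"
    by (intro sum.cong) (auto simp: vnorm power_abs)
  finally show ?thesis unfolding Tm_def using c_nonneg[of p]
    by (simp add: mult_left_mono)
qed

lemma Tm_comp: assumes "i \<in> {1..k}" shows "v i \<bullet> Tm p x = c p * real p * (v i \<bullet> x) ^ (p - 1)"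
  unfolding Tm_def inner_scaleR_right inner_comb[OF assms, of "\<lambda>j. (v j \<bullet> x) ^ (p - 1)"] ..

lemma suminf_junk: assumes "\<not> summable f" shows "suminf f = (THE s. False)"
proof -
  have "(\<lambda>s. f sums s) = (\<lambda>s. False)" using assms unfolding summable_def by auto
  then show ?thesis unfolding suminf_def by simp
qed

lemma grad_bound: "\<exists>\<delta>>0. \<exists>M. \<forall>x. norm x \<le> 1 + \<delta> \<longrightarrow> \<bar>x \<bullet> lg x\<bar> \<le> M"
proof (cases "\<exists>\<delta>>0. \<delta> \<le> 1 \<and> summable (\<lambda>p. c p * real p * (1 + \<delta>) ^ (p - 1))")
  case True
  then obtain \<delta> where d: "\<delta> > 0" "\<delta> \<le> 1" "summable (\<lambda>p. c p * real p * (1 + \<delta>) ^ (p - 1))" by auto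
  define h where "h p = real k * (c p * real p * (1 + \<delta>) ^ (p - 1))" for p
  have hs: "summable h" unfolding h_def using d(3) by (rule summable_mult)
  have "0 \<le> h p" for p unfolding h_def using c_nonneg[of p] d by (intro mult_nonneg_nonneg) auto
  then have hn: "0 \<le> suminf h" using hs by (intro suminf_nonneg) auto
  have "\<forall>x. norm x \<le> 1 + \<delta> \<longrightarrow> \<bar>x \<bullet> lg x\<bar> \<le> (1 + \<delta>) * suminf h"
  proof (intro allI impI)
    fix x :: "real^'d" assume x: "norm x \<le> 1 + \<delta>"
    have "norm (Tm p x) \<le> h p" for p
    proof -
      have "(\<Sum>j\<in>{1..k}. \<bar>v j \<bullet> x\<bar> ^ (p - 1)) \<le> (\<Sum>j\<in>{1..k}. (1 + \<delta>) ^ (p - 1))"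
        using ubnd x by (intro sum_mono power_mono) (auto intro: order_trans)
      then have "c p * real p * (\<Sum>j\<in>{1..k}. \<bar>v j \<bullet> x\<bar> ^ (p - 1)) \<le> c p * real p * (\<Sum>j\<in>{1..k}. (1 + \<delta>) ^ (p - 1))"
        using c_nonneg[of p] by (intro mult_left_mono) auto
      then show ?thesis using Tm_norm[of p x] unfolding h_def by (simp add: algebra_simps)
    qed
    then have "norm (suminf (\<lambda>p. Tm p x)) \<le> suminf h" using hs by (rule norm_suminf_le)
    then have "norm (lg x) \<le> suminf h" by (simp add: lg_Tm)
    then have "norm x * norm (lg x) \<le> (1 + \<delta>) * suminf h"
      using x hn d by (intro mult_mono) auto
    then show "\<bar>x \<bullet> lg x\<bar> \<le> (1 + \<delta>) * suminf h"
      using Cauchy_Schwarz_ineq2[of x "lg x"] by linarith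
  qed
  then show ?thesis using d by blast
next
  case False
  define M1 where "M1 = real k * Kc + norm (THE s::real^'d. False)"
  have "\<forall>x. norm x \<le> 1 + 1 \<longrightarrow> \<bar>x \<bullet> lg x\<bar> \<le> 2 * M1"
  proof (intro allI impI)
    fix x :: "real^'d" assume x: "norm x \<le> 1 + 1"
    have "norm (suminf (\<lambda>p. Tm p x)) \<le> M1"
    proof (cases "summable (\<lambda>p. Tm p x)")
      case True
      have small: "\<bar>v j \<bullet> x\<bar> \<le> 1" if j: "j \<in> {1..k}" for j
      proof (rule ccontr)
        assume "\<not> \<bar>v j \<bullet> x\<bar> \<le> 1"
        then have u1: "\<bar>v j \<bullet> x\<bar> > 1" by simp
        define u where "u = v j \<bullet> x"
        have u2: "\<bar>u\<bar> \<le> 2" using ubnd[OF j, of x] x unfolding u_def by simp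
        have "summable (\<lambda>p. v j \<bullet> Tm p x)"
          using bounded_linear.summable[OF bounded_linear_inner_right True] .
        then have su: "summable (\<lambda>p. c p * real p * u ^ (p - 1))"
          using Tm_comp[OF j] unfolding u_def by simp
        then have "(\<lambda>p. c p * real p * u ^ (p - 1)) \<longlonglongrightarrow> 0" by (rule summable_LIMSEQ_zero)
        then obtain N where N: "\<And>p. p \<ge> N \<Longrightarrow> \<bar>c p * real p * u ^ (p - 1)\<bar> < 1"
          unfolding LIMSEQ_iff by (metis real_norm_def diff_zero zero_less_one)
        define r where "r = (1 + \<bar>u\<bar>) / 2"
        define q where "q = r / \<bar>u\<bar>"
        have q: "0 < q" "q < 1" using u1 unfolding q_def r_def u_def by (auto simp: field_simps)
        have sq: "summable (\<lambda>p. q ^ (p - 1))"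
        proof -
          have "summable (\<lambda>n. q ^ n)" using q by (intro summable_geometric) auto
          then have "summable (\<lambda>n. q ^ ((n + 1) - 1))" by simp
          then show ?thesis by (subst summable_iff_shift[of _ 1, symmetric])
        qed
        have "summable (\<lambda>p. c p * real p * r ^ (p - 1))"
        proof (rule summable_comparison_test'[OF sq])
          fix p assume p: "N \<le> p"
          have rr: "r ^ (p - 1) = \<bar>u\<bar> ^ (p - 1) * q ^ (p - 1)"
          proof -
            have "\<bar>u\<bar> \<noteq> 0" using u1 unfolding u_def by simp
            then show ?thesis unfolding q_def by (simp add: power_divide)
          qed
          have "c p * real p * r ^ (p - 1) = \<bar>c p * real p * u ^ (p - 1)\<bar> * q ^ (p - 1)"
            using c_nonneg[of p] unfolding rr by (simp add: abs_mult power_abs)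
          also have "\<dots> \<le> 1 * q ^ (p - 1)"
            using N[OF p] q by (intro mult_right_mono) auto
          finally show "norm (c p * real p * r ^ (p - 1)) \<le> q ^ (p - 1)"
            using c_nonneg[of p] q u1 unfolding r_def by simp
        qed
        moreover have "r = 1 + (\<bar>u\<bar> - 1) / 2" unfolding r_def by (simp add: field_simps)
        ultimately have "summable (\<lambda>p. c p * real p * (1 + (\<bar>u\<bar> - 1) / 2) ^ (p - 1))" by simp
        moreover have "(\<bar>u\<bar> - 1) / 2 > 0" "(\<bar>u\<bar> - 1) / 2 \<le> 1" using u1 u2 unfolding u_def by auto
        ultimately show False using False by blast
      qed
      have "norm (Tm p x) \<le> real k * (c p * real p)" for p
      proof -
        have "(\<Sum>j\<in>{1..k}. \<bar>v j \<bullet> x\<bar> ^ (p - 1)) \<le> (\<Sum>j\<in>{1..k}. 1)"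
          using small by (intro sum_mono power_le_one) auto
        then have "c p * real p * (\<Sum>j\<in>{1..k}. \<bar>v j \<bullet> x\<bar> ^ (p - 1)) \<le> c p * real p * real k"
          using c_nonneg[of p] by (intro mult_left_mono) auto
        then show ?thesis using Tm_norm[of p x] by (simp add: algebra_simps)
      qed
      then have "norm (suminf (\<lambda>p. Tm p x)) \<le> suminf (\<lambda>p. real k * (c p * real p))"
        by (rule norm_suminf_le) (intro summable_mult summ_cp)
      also have "\<dots> = real k * Kc" unfolding Kc_def by (rule suminf_mult[OF summ_cp])
      finally show ?thesis unfolding M1_def using norm_ge_zero[of "THE s::real^'d. False"] by linarith
    next
      case False
      then show ?thesis unfolding M1_def using suminf_junk[OF False]
        by (simp add: Kc_nonneg)
    qed
    then have "norm (lg x) \<le> M1" by (simp add: lg_Tm)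
    moreover have "0 \<le> M1" unfolding M1_def using Kc_nonneg by simp
    ultimately have "norm x * norm (lg x) \<le> 2 * M1"
      using x by (intro mult_mono) auto
    then show "\<bar>x \<bullet> lg x\<bar> \<le> 2 * M1"
      using Cauchy_Schwarz_ineq2[of x "lg x"] by linarith
  qed
  then show ?thesis by (intro exI[of _ "1::real"]) auto
qed

end

context vec begin

lemma wcont: "continuous_on {0..} w"
  unfolding continuous_on_eq_continuous_within using ode by (meson atLeast_iff has_vector_derivative_continuous)

lemma norm_pres: assumes t: "t \<ge> 0" shows "norm (w t) = 1"
proof -
  obtain \<delta> M where dM: "\<delta> > 0" "\<And>x. norm x \<le> 1 + \<delta> \<Longrightarrow> \<bar>x \<bullet> lg x\<bar> \<le> M"
    using grad_bound by blast
  define s where "s t = w t \<bullet> w t - 1" for t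
  define a where "a t = w t \<bullet> lg (w t)" for t
  have sd: "(s has_real_derivative 2 * a t * s t) (at t within {0..})" if t: "t \<ge> 0" for t
  proof -
    let ?w' = "- (lg (w t) - (w t \<bullet> lg (w t)) *\<^sub>R w t)"
    have d: "(w has_vector_derivative ?w') (at t within {0..})" using ode t by auto
    from bounded_bilinear.has_vector_derivative[OF bounded_bilinear_inner d d]
    have "((\<lambda>t. w t \<bullet> w t) has_vector_derivative (w t \<bullet> ?w' + ?w' \<bullet> w t)) (at t within {0..})" .
    then have "((\<lambda>t. w t \<bullet> w t - 1) has_real_derivative (w t \<bullet> ?w' + ?w' \<bullet> w t)) (at t within {0..})"
    proof -
      have "((\<lambda>t. w t \<bullet> w t) has_real_derivative (w t \<bullet> ?w' + ?w' \<bullet> w t)) (at t within {0..})"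
        unfolding has_real_derivative_iff_has_vector_derivative by fact
      from DERIV_diff[OF this DERIV_const[of 1]] show ?thesis by simp
    qed
    moreover have "w t \<bullet> ?w' = a t * s t"
      unfolding a_def s_def inner_minus_right inner_diff_right inner_scaleR_right by (simp add: algebra_simps)
    moreover have "?w' \<bullet> w t = w t \<bullet> ?w'" by (rule inner_commute)
    ultimately have "((\<lambda>t. w t \<bullet> w t - 1) has_real_derivative 2 * a t * s t) (at t within {0..})"
      by (simp add: mult.assoc)
    then show ?thesis unfolding s_def by simp
  qed
  have "\<forall>t\<ge>0. s t = 0"
  proof (rule zero_persist)
    show "continuous_on {0..} s" by (rule deriv_within_cont[OF sd])
    show "s 0 = 0" using unit0 unfolding s_def by (simp add: power2_norm_eq_inner[symmetric])
  next
    fix \<tau> :: real assume \<tau>: "\<tau> \<ge> 0" "s \<tau> = 0"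
    have n\<tau>: "norm (w \<tau>) = 1" using \<tau> unfolding s_def
      by (metis eq_iff_diff_eq_0 norm_eq_sqrt_inner real_sqrt_one)
    have "continuous (at \<tau> within {0..}) w" using ode \<tau>(1) by (meson has_vector_derivative_continuous)
    then have "\<forall>\<epsilon>>0. \<exists>d>0. \<forall>x'\<in>{0..}. dist x' \<tau> < d \<longrightarrow> dist (w x') (w \<tau>) < \<epsilon>"
      unfolding continuous_within_eps_delta .
    from this[rule_format, OF dM(1)]
    obtain e where e: "e > 0" "\<forall>x'\<in>{0..}. dist x' \<tau> < e \<longrightarrow> dist (w x') (w \<tau>) < \<delta>"
      by blast
    show "\<exists>\<epsilon>>0. \<forall>t. \<tau> \<le> t \<and> t \<le> \<tau> + \<epsilon> \<longrightarrow> s t = 0"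
    proof (intro exI[of _ "e/2"] conjI allI impI)
      show "e / 2 > 0" using e by simp
      fix t assume t: "\<tau> \<le> t \<and> t \<le> \<tau> + e / 2"
      have "s t * s t \<le> s \<tau> * s \<tau> * exp ((4 * M) * (t - \<tau>))"
      proof (rule gronwall_le[where x' = "\<lambda>t. 2 * s t * (2 * a t * s t)"])
        show "0 \<le> \<tau>" "\<tau> \<le> t" using \<tau> t by auto
        fix r assume r: "\<tau> \<le> r" "r \<le> t"
        have r0: "r \<ge> 0" using r \<tau> by simp
        show "((\<lambda>t. s t * s t) has_real_derivative 2 * s r * (2 * a r * s r)) (at r within {0..})"
          using DERIV_mult[OF sd[OF r0] sd[OF r0]] by (simp add: algebra_simps)
        have "dist (w r) (w \<tau>) < \<delta>" using e r t r0 by (auto simp: dist_real_def)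
        then have "norm (w r - w \<tau>) < \<delta>" by (simp add: dist_norm)
        then have "norm (w r) \<le> 1 + \<delta>" using n\<tau> norm_triangle_sub[of "w r" "w \<tau>"]
          by linarith
        then have "\<bar>a r\<bar> \<le> M" unfolding a_def by (rule dM(2))
        then have "a r \<le> M" by simp
        then have "a r * (4 * (s r * s r)) \<le> M * (4 * (s r * s r))" by (intro mult_right_mono) auto
        then show "2 * s r * (2 * a r * s r) \<le> (4 * M) * (s r * s r)" by (simp add: algebra_simps)
      qed
      then have "s t * s t \<le> 0" using \<tau> by simp
      then show "s t = 0" by (metis mult_le_0_iff linorder_not_le order_antisym zero_le_square)
    qed
  qed
  then have "s t = 0" using t by auto
  then show ?thesis unfolding s_def
    by (metis eq_iff_diff_eq_0 norm_eq_sqrt_inner real_sqrt_one)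
qed

lemma bessel: "(\<Sum>j\<in>{1..k}. (v j \<bullet> x)^2) \<le> (norm x)^2"
proof -
  define p where "p = (\<Sum>j\<in>{1..k}. (v j \<bullet> x) *\<^sub>R v j)"
  have vp: "v i \<bullet> p = v i \<bullet> x" if "i \<in> {1..k}" for i
    unfolding p_def by (rule inner_comb[OF that])
  have pp: "p \<bullet> p = (\<Sum>j\<in>{1..k}. (v j \<bullet> x)^2)"
  proof -
    have gen: "p \<bullet> q = (\<Sum>j\<in>{1..k}. (v j \<bullet> x) * (v j \<bullet> q))" for q
      unfolding p_def inner_sum_left inner_scaleR_left ..
    have "p \<bullet> p = (\<Sum>j\<in>{1..k}. (v j \<bullet> x) * (v j \<bullet> p))" by (rule gen)
    also have "\<dots> = (\<Sum>j\<in>{1..k}. (v j \<bullet> x)^2)"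
      by (intro sum.cong) (auto simp: vp power2_eq_square)
    finally show ?thesis .
  qed
  have xp: "x \<bullet> p = (\<Sum>j\<in>{1..k}. (v j \<bullet> x)^2)"
    unfolding p_def inner_sum_right inner_scaleR_right
    by (intro sum.cong) (auto simp: power2_eq_square inner_commute[of x])
  have "0 \<le> (x - p) \<bullet> (x - p)" by simp
  also have "\<dots> = x \<bullet> x - 2 * (x \<bullet> p) + p \<bullet> p"
    unfolding inner_diff_left inner_diff_right by (simp add: inner_commute[of p x])
  finally show ?thesis using pp xp by (simp add: power2_norm_eq_inner)
qed

end

lemma powdiff:
  fixes x y r :: real
  assumes x: "\<bar>x\<bar> \<le> r" and y: "\<bar>y\<bar> \<le> r"
  shows "\<bar>x^n - y^n\<bar> \<le> real n * r^(n-1) * \<bar>x - y\<bar>"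
proof -
  have "\<bar>x^n - y^n\<bar> = \<bar>x - y\<bar> * \<bar>\<Sum>i<n. y^(n - Suc i) * x^i\<bar>"
    by (simp add: power_diff_sumr2 abs_mult)
  also have "\<bar>\<Sum>i<n. y^(n - Suc i) * x^i\<bar> \<le> (\<Sum>i<n. r^(n - 1))"
  proof -
    have "\<bar>\<Sum>i<n. y^(n - Suc i) * x^i\<bar> \<le> (\<Sum>i<n. \<bar>y^(n - Suc i) * x^i\<bar>)" by (rule sum_abs)
    also have "\<dots> \<le> (\<Sum>i<n. r^(n - 1))"
    proof (rule sum_mono)
      fix i assume i: "i \<in> {..<n}"
      have "\<bar>y^(n - Suc i) * x^i\<bar> = \<bar>y\<bar>^(n - Suc i) * \<bar>x\<bar>^i" by (simp add: abs_mult power_abs)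
      also have "\<dots> \<le> r^(n - Suc i) * r^i"
        using x y by (intro mult_mono power_mono) auto
      also have "\<dots> = r^(n - 1)" using i by (simp add: power_add[symmetric])
      finally show "\<bar>y^(n - Suc i) * x^i\<bar> \<le> r^(n - 1)" .
    qed
    finally show ?thesis .
  qed
  then have "\<bar>x - y\<bar> * \<bar>\<Sum>i<n. y^(n - Suc i) * x^i\<bar> \<le> \<bar>x - y\<bar> * (\<Sum>i<n. r^(n - 1))"
    by (rule mult_left_mono) simp
  finally show ?thesis by (simp add: mult.commute mult.left_commute)
qed

lemma summable_nr: "\<bar>r::real\<bar> < 1 \<Longrightarrow> summable (\<lambda>n. real (Suc n) * r^n)"
  using termdiff_converges[of r 1 "\<lambda>_. 1"] by (simp add: diffs_def)

locale vec3 = vec +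
  assumes P3: "3 \<le> info_exp \<sigma>s"
begin

definition "Gf u = (\<Sum>p. c p * real p * u^(p-2))"

lemma c_small: "p < 3 \<Longrightarrow> c p = 0" using c_zero_below P3 by simp

lemma G_summ: assumes "\<bar>u\<bar> \<le> 1" shows "summable (\<lambda>p. c p * real p * u^(p-2))"
proof (rule summable_comparison_test'[OF summ_cp])
  fix p :: nat
  have "\<bar>u\<bar>^(p-2) \<le> 1" using assms by (simp add: power_le_one)
  then have "c p * real p * \<bar>u\<bar>^(p-2) \<le> c p * real p * 1"
    using c_nonneg[of p] by (intro mult_left_mono) auto
  then show "norm (c p * real p * u^(p-2)) \<le> c p * real p"
    using c_nonneg[of p] by (simp add: abs_mult power_abs)
qed

lemma G_bnd: assumes "\<bar>u\<bar> \<le> 1" shows "\<bar>Gf u\<bar> \<le> Kc"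
proof -
  have "norm (suminf (\<lambda>p. c p * real p * u^(p-2))) \<le> suminf (\<lambda>p. c p * real p)"
  proof (rule norm_suminf_le[OF _ summ_cp])
    fix p :: nat
    have "\<bar>u\<bar>^(p-2) \<le> 1" using assms by (simp add: power_le_one)
    then have "c p * real p * \<bar>u\<bar>^(p-2) \<le> c p * real p * 1"
      using c_nonneg[of p] by (intro mult_left_mono) auto
    then show "norm (c p * real p * u^(p-2)) \<le> c p * real p"
      using c_nonneg[of p] by (simp add: abs_mult power_abs)
  qed
  then show ?thesis unfolding Gf_def Kc_def by simp
qed

lemma G_m: assumes "0 \<le> x" "x \<le> y" "y \<le> 1"
  shows "Gf x + (c P * real P) * (y^(P-2) - x^(P-2)) \<le> Gf y"
proof -
  define d where "d p = c p * real p * (y^(p-2) - x^(p-2))" for p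
  have sx: "summable (\<lambda>p. c p * real p * x^(p-2))" using assms by (intro G_summ) auto
  have sy: "summable (\<lambda>p. c p * real p * y^(p-2))" using assms by (intro G_summ) auto
  have sd: "summable d" unfolding d_def using summable_diff[OF sy sx] by (simp add: algebra_simps)
  have "Gf y - Gf x = suminf d"
    unfolding Gf_def d_def using suminf_diff[OF sy sx] by (simp add: algebra_simps)
  moreover have "d P \<le> suminf d"
  proof -
    have "sum d {P} \<le> suminf d"
    proof (rule sum_le_suminf[OF sd])
      fix p :: nat
      have "x^(p-2) \<le> y^(p-2)" using assms by (intro power_mono) auto
      then show "0 \<le> d p" unfolding d_def using c_nonneg[of p] by simp
    qed simp
    then show ?thesis by simp
  qed
  ultimately show ?thesis unfolding d_def by simp
qed

lemma G_0: "0 \<le> Gf 0"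
  unfolding Gf_def using c_nonneg by (intro suminf_nonneg G_summ) auto

lemma F_sums: assumes "\<bar>u\<bar> \<le> 1" shows "(\<lambda>p. c p * real p * u^(p-1)) sums (u * Gf u)"
proof -
  have "(\<lambda>p. u * (c p * real p * u^(p-2))) sums (u * Gf u)"
    unfolding Gf_def by (rule sums_mult[OF summable_sums[OF G_summ[OF assms]]])
  moreover have "u * (c p * real p * u^(p-2)) = c p * real p * u^(p-1)" for p
  proof (cases "p < 2")
    case True then show ?thesis using c_small[of p] by simp
  next
    case False
    then have "p - 1 = Suc (p - 2)" by simp
    then show ?thesis by (simp add: algebra_simps)
  qed
  ultimately show ?thesis by simp
qed

definition "Lc = (\<Sum>p. c p * real p * (real (p-1) * (4/5)^(p-2)))"

lemma L_summ: "summable (\<lambda>p. c p * real p * (real (p-1) * (4/5::real)^(p-2)))"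
proof -
  have s1: "summable (\<lambda>n. real (Suc n) * (4/5::real)^n)" by (rule summable_nr) simp
  have "summable (\<lambda>p. real (Suc (p-2)) * (4/5::real)^(p-2))"
    using s1 by (subst summable_iff_shift[of _ 2, symmetric]) simp
  then have s2: "summable (\<lambda>p. Kc * (real (Suc (p-2)) * (4/5::real)^(p-2)))" by (rule summable_mult)
  show ?thesis
  proof (rule summable_comparison_test'[OF s2])
    fix p :: nat
    have a: "real (p-1) * (4/5::real)^(p-2) \<le> real (Suc (p-2)) * (4/5)^(p-2)"
      by (intro mult_right_mono) auto
    have "c p * real p * (real (p-1) * (4/5::real)^(p-2)) \<le> Kc * (real (Suc (p-2)) * (4/5)^(p-2))"
      using cp_le_K[of p] c_nonneg[of p] a Kc_nonneg by (intro mult_mono) auto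
    then show "norm (c p * real p * (real (p-1) * (4/5::real)^(p-2))) \<le> Kc * (real (Suc (p-2)) * (4/5)^(p-2))"
      using c_nonneg[of p] by simp
  qed
qed

lemma L_nonneg: "0 \<le> Lc"
  unfolding Lc_def using c_nonneg by (intro suminf_nonneg L_summ) auto

lemma G_lip: assumes x: "\<bar>x\<bar> \<le> 4/5" and y: "\<bar>y\<bar> \<le> 4/5"
  shows "\<bar>x * Gf x - y * Gf y\<bar> \<le> Lc * \<bar>x - y\<bar>"
proof -
  have sx: "(\<lambda>p. c p * real p * x^(p-1)) sums (x * Gf x)" using x by (intro F_sums) auto
  have sy: "(\<lambda>p. c p * real p * y^(p-1)) sums (y * Gf y)" using y by (intro F_sums) auto
  have "(\<lambda>p. c p * real p * x^(p-1) - c p * real p * y^(p-1)) sums (x * Gf x - y * Gf y)"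
    by (rule sums_diff[OF sx sy])
  then have e: "x * Gf x - y * Gf y = suminf (\<lambda>p. c p * real p * x^(p-1) - c p * real p * y^(p-1))"
    by (rule sums_unique)
  have "norm (suminf (\<lambda>p. c p * real p * x^(p-1) - c p * real p * y^(p-1)))
      \<le> suminf (\<lambda>p. c p * real p * (real (p-1) * (4/5)^(p-2)) * \<bar>x - y\<bar>)"
  proof (rule norm_suminf_le)
    fix p :: nat
    have "\<bar>x^(p-1) - y^(p-1)\<bar> \<le> real (p-1) * (4/5)^(p-1-1) * \<bar>x - y\<bar>" by (rule powdiff[OF x y])
    then have "c p * real p * \<bar>x^(p-1) - y^(p-1)\<bar> \<le> c p * real p * (real (p-1) * (4/5)^(p-2) * \<bar>x - y\<bar>)"
      using c_nonneg[of p] by (intro mult_left_mono) (auto simp: numeral_2_eq_2)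
    then show "norm (c p * real p * x^(p-1) - c p * real p * y^(p-1)) \<le> c p * real p * (real (p-1) * (4/5)^(p-2)) * \<bar>x - y\<bar>"
      using c_nonneg[of p] by (simp add: abs_mult right_diff_distrib[symmetric] mult.assoc)
  next
    show "summable (\<lambda>p. c p * real p * (real (p-1) * (4/5::real)^(p-2)) * \<bar>x - y\<bar>)"
      by (rule summable_mult2[OF L_summ])
  qed
  also have "\<dots> = Lc * \<bar>x - y\<bar>" unfolding Lc_def by (rule suminf_mult2[OF L_summ, symmetric])
  finally show ?thesis using e by simp
qed

end

lemma hermite_prob_neg: "hermite_prob n (- x) = (-1)^n * hermite_prob n x"
  by (induction n x rule: hermite_prob.induct) (auto simp: algebra_simps)

lemma hcoeff_odd:
  assumes ev: "\<forall>x. f (- x) = f x" and p: "odd p"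
  shows "hcoeff f p = 0"
proof -
  define g where "g x = f x * hermite_h p x * std_normal_density x" for x
  have gneg: "g (- x) = - g x" for x
    unfolding g_def hermite_h_def using ev p
    by (simp add: hermite_prob_neg std_normal_density_def)
  have "(LINT x|lborel. g x) = \<bar>-1::real\<bar> *\<^sub>R (LINT x|lborel. g (0 + (-1) * x))"
    by (rule lborel_integral_real_affine) simp
  also have "\<dots> = (LINT x|lborel. - g x)" by (simp add: gneg)
  also have "\<dots> = - (LINT x|lborel. g x)" by (rule integral_minus)
  finally have "(LINT x|lborel. g x) = 0" by simp
  then show ?thesis unfolding hcoeff_def g_def .
qed

context vec3 begin

definition "Sv t = (\<Sum>i\<in>{1..k}. (v i \<bullet> w t)^2 * Gf (v i \<bullet> w t))"

lemma grad_formula: assumes "\<forall>j\<in>{1..k}. \<bar>v j \<bullet> x\<bar> \<le> 1"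
  shows "lg x = - (\<Sum>j\<in>{1..k}. ((v j \<bullet> x) * Gf (v j \<bullet> x)) *\<^sub>R v j)"
proof -
  have T: "Tm p x = (\<Sum>j\<in>{1..k}. (c p * real p * (v j \<bullet> x)^(p-1)) *\<^sub>R v j)" for p
    unfolding Tm_def scaleR_sum_right by simp
  have "(\<lambda>p. \<Sum>j\<in>{1..k}. (c p * real p * (v j \<bullet> x)^(p-1)) *\<^sub>R v j) sums
        (\<Sum>j\<in>{1..k}. ((v j \<bullet> x) * Gf (v j \<bullet> x)) *\<^sub>R v j)"
    by (rule sums_sum, rule sums_scaleR_left, rule F_sums) (use assms in auto)
  then have "(\<lambda>p. Tm p x) sums (\<Sum>j\<in>{1..k}. ((v j \<bullet> x) * Gf (v j \<bullet> x)) *\<^sub>R v j)"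
    by (simp add: T)
  then show ?thesis unfolding lg_Tm by (simp add: sums_unique[symmetric])
qed

lemma u_deriv: assumes j: "j \<in> {1..k}" and t: "t \<ge> 0"
  shows "((\<lambda>t. v j \<bullet> w t) has_real_derivative (v j \<bullet> w t) * (Gf (v j \<bullet> w t) - Sv t)) (at t within {0..})"
proof -
  let ?g = "lg (w t)"
  let ?w' = "- (?g - (w t \<bullet> ?g) *\<^sub>R w t)"
  have d: "(w has_vector_derivative ?w') (at t within {0..})" using ode t by auto
  have "((\<lambda>t. v j \<bullet> w t) has_vector_derivative v j \<bullet> ?w') (at t within {0..})"
    by (rule bounded_linear.has_vector_derivative[OF bounded_linear_inner_right d])
  then have dd: "((\<lambda>t. v j \<bullet> w t) has_real_derivative v j \<bullet> ?w') (at t within {0..})"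
    unfolding has_real_derivative_iff_has_vector_derivative .
  have bnd: "\<forall>i\<in>{1..k}. \<bar>v i \<bullet> w t\<bar> \<le> 1"
  proof
    fix i assume "i \<in> {1..k}"
    from ubnd[OF this, of "w t"] show "\<bar>v i \<bullet> w t\<bar> \<le> 1" using norm_pres[OF t] by simp
  qed
  have g: "?g = - (\<Sum>i\<in>{1..k}. ((v i \<bullet> w t) * Gf (v i \<bullet> w t)) *\<^sub>R v i)"
    by (rule grad_formula[OF bnd])
  have vg: "v j \<bullet> ?g = - ((v j \<bullet> w t) * Gf (v j \<bullet> w t))"
    unfolding g inner_minus_right inner_comb[OF j] ..
  have wg: "w t \<bullet> ?g = - Sv t"
  proof -
    have "w t \<bullet> ?g = - (\<Sum>i\<in>{1..k}. ((v i \<bullet> w t) * Gf (v i \<bullet> w t)) * (w t \<bullet> v i))"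
      unfolding g inner_minus_right inner_sum_right inner_scaleR_right ..
    also have "\<dots> = - Sv t" unfolding Sv_def
      by (simp add: inner_commute[of "w t"] power2_eq_square mult.commute mult.left_commute)
    finally show ?thesis .
  qed
  have "v j \<bullet> ?w' = (v j \<bullet> w t) * (Gf (v j \<bullet> w t) - Sv t)"
    unfolding inner_minus_right inner_diff_right inner_scaleR_right vg wg
    by (simp add: algebra_simps)
  with dd show ?thesis by simp
qed

lemma sq_le: "t \<ge> 0 \<Longrightarrow> (\<Sum>j\<in>{1..k}. (v j \<bullet> w t)^2) \<le> 1"
  using bessel[of "w t"] norm_pres[of t] by simp

lemma core_inst:
  fixes U :: "nat \<Rightarrow> real \<Rightarrow> real" and a :: real and l :: nat
  assumes Sd: "\<And>t. S t = (\<Sum>j\<in>{1..k}. (U j t)^2 * Gf (U j t))"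
    and der: "\<And>j t. j \<in> {1..k} \<Longrightarrow> t \<ge> 0 \<Longrightarrow>
      (U j has_real_derivative (U j t * (Gf (U j t) - S t))) (at t within {0..})"
    and sq: "\<And>t. t \<ge> 0 \<Longrightarrow> (\<Sum>j\<in>{1..k}. (U j t)^2) \<le> 1"
    and l1: "1 \<le> l" and lk: "l \<le> k" and a0: "0 \<le> a"
    and top: "\<And>j. j \<in> {1..l} \<Longrightarrow> U j 0 = a"
    and low: "\<And>j. j \<in> {l+1..k} \<Longrightarrow> 0 \<le> U j 0 \<and> U j 0 < a"
  shows "core Kc (c P * real P) Lc a (P - 2) k l Gf U S"
proof (rule core.intro)
  show "0 \<le> Kc" by (rule Kc_nonneg)
  show "0 < c P * real P" using cP_pos P3 by simp
  show "1 \<le> P - 2" using P3 by simp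
  show "0 \<le> Lc" by (rule L_nonneg)
  show "\<And>u. \<bar>u\<bar> \<le> 1 \<Longrightarrow> \<bar>Gf u\<bar> \<le> Kc" by (rule G_bnd)
  show "\<And>x y. 0 \<le> x \<Longrightarrow> x \<le> y \<Longrightarrow> y \<le> 1 \<Longrightarrow> Gf x + c P * real P * (y ^ (P - 2) - x ^ (P - 2)) \<le> Gf y"
    by (rule G_m)
  show "0 \<le> Gf 0" by (rule G_0)
  show "\<And>x y. \<bar>x\<bar> \<le> 4 / 5 \<Longrightarrow> \<bar>y\<bar> \<le> 4 / 5 \<Longrightarrow> \<bar>x * Gf x - y * Gf y\<bar> \<le> Lc * \<bar>x - y\<bar>"
    by (rule G_lip)
qed (fact+)

end

context vec3 begin

lemma partA:
  assumes pos: "\<forall>j\<in>{1..k}. v j \<bullet> w 0 > 0"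
    and eq: "\<forall>j\<in>{1..l}. v j \<bullet> w 0 = v 1 \<bullet> w 0"
    and lt: "\<forall>j\<in>{l+1..k}. v j \<bullet> w 0 < v 1 \<bullet> w 0"
    and lr: "l \<in> {1..k}"
  shows "(\<forall>j\<in>{1..l}. ((\<lambda>t. v j \<bullet> w t) \<longlongrightarrow> 1 / sqrt (real l)) at_top) \<and>
         (\<forall>j\<in>{l+1..k}. ((\<lambda>t. v j \<bullet> w t) \<longlongrightarrow> 0) at_top)"
proof -
  have apos: "v 1 \<bullet> w 0 > 0" using pos lr by auto
  have C: "core Kc (c P * real P) Lc (v 1 \<bullet> w 0) (P - 2) k l Gf (\<lambda>j t. v j \<bullet> w t) Sv"
  proof (rule core_inst)
    show "\<And>t. Sv t = (\<Sum>j\<in>{1..k}. (v j \<bullet> w t)^2 * Gf (v j \<bullet> w t))" by (simp add: Sv_def)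
    show "\<And>j t. j \<in> {1..k} \<Longrightarrow> t \<ge> 0 \<Longrightarrow>
      ((\<lambda>t. v j \<bullet> w t) has_real_derivative ((v j \<bullet> w t) * (Gf (v j \<bullet> w t) - Sv t))) (at t within {0..})"
      by (rule u_deriv)
    show "\<And>t. t \<ge> 0 \<Longrightarrow> (\<Sum>j\<in>{1..k}. (v j \<bullet> w t)^2) \<le> 1" by (rule sq_le)
    show "1 \<le> l" "l \<le> k" using lr by auto
    show "0 \<le> v 1 \<bullet> w 0" using apos by simp
    show "\<And>j. j \<in> {1..l} \<Longrightarrow> v j \<bullet> w 0 = v 1 \<bullet> w 0" using eq by blast
    show "\<And>j. j \<in> {l+1..k} \<Longrightarrow> 0 \<le> v j \<bullet> w 0 \<and> v j \<bullet> w 0 < v 1 \<bullet> w 0"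
      proof -
      fix j assume j: "j \<in> {l+1..k}"
      then have "j \<in> {1..k}" using lr by auto
      then have "0 < v j \<bullet> w 0" using pos by blast
      moreover have "v j \<bullet> w 0 < v 1 \<bullet> w 0" using lt j by blast
      ultimately show "0 \<le> v j \<bullet> w 0 \<and> v j \<bullet> w 0 < v 1 \<bullet> w 0" by simp
    qed
  qed
  from core.core_result[OF C] apos show ?thesis by simp
qed

lemma G_even: assumes odd0: "\<forall>p. odd p \<longrightarrow> c p = 0" shows "Gf (- u) = Gf u"
proof -
  have "c p * real p * (- u)^(p-2) = c p * real p * u^(p-2)" for p
  proof (cases "even p")
    case True
    then obtain q where q: "p = 2 * q" by blast
    then have "p - 2 = 2 * (q - 1)" by simp
    then show ?thesis by (simp add: power_mult)
  next
    case False
    then show ?thesis using odd0 by simp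
  qed
  then have e: "(\<lambda>p. c p * real p * (- u)^(p-2)) = (\<lambda>p. c p * real p * u^(p-2))" by (rule ext)
  show ?thesis unfolding Gf_def e ..
qed

lemma partB:
  assumes even: "\<forall>x. \<sigma>s (- x) = \<sigma>s x"
    and eq: "\<forall>j\<in>{1..l}. \<bar>v j \<bullet> w 0\<bar> = \<bar>v 1 \<bullet> w 0\<bar>"
    and lt: "\<forall>j\<in>{l+1..k}. \<bar>v j \<bullet> w 0\<bar> < \<bar>v 1 \<bullet> w 0\<bar>"
    and lr: "l \<in> {1..k}"
  shows "(\<forall>j\<in>{1..l}. ((\<lambda>t. v j \<bullet> w t) \<longlongrightarrow> sgn (v j \<bullet> w 0) / sqrt (real l)) at_top) \<and>
         (\<forall>j\<in>{l+1..k}. ((\<lambda>t. v j \<bullet> w t) \<longlongrightarrow> 0) at_top)"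
proof -
  have odd0: "\<forall>p. odd p \<longrightarrow> c p = 0"
    using hcoeff_odd[OF even] unfolding ccoef_def by simp
  define \<epsilon> where "\<epsilon> j = (if v j \<bullet> w 0 < 0 then -1 else (1::real))" for j
  have e2: "\<epsilon> j * \<epsilon> j = 1" for j unfolding \<epsilon>_def by simp
  have eG: "Gf (\<epsilon> j * u) = Gf u" for j u
    unfolding \<epsilon>_def using G_even[OF odd0] by simp
  have esq: "(\<epsilon> j * u)^2 = u^2" for j u
    unfolding power2_eq_square using e2[of j] by (simp add: algebra_simps)
  have eabs: "\<epsilon> j * (v j \<bullet> w 0) = \<bar>v j \<bullet> w 0\<bar>" for j unfolding \<epsilon>_def by simp
  define U where "U j t = \<epsilon> j * (v j \<bullet> w t)" for j t
  define a where "a = \<bar>v 1 \<bullet> w 0\<bar>"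
  have C: "core Kc (c P * real P) Lc a (P - 2) k l Gf U Sv"
  proof (rule core_inst)
    show "\<And>t. Sv t = (\<Sum>j\<in>{1..k}. (U j t)^2 * Gf (U j t))"
      by (simp add: Sv_def U_def esq eG)
    show "\<And>j t. j \<in> {1..k} \<Longrightarrow> t \<ge> 0 \<Longrightarrow>
      (U j has_real_derivative (U j t * (Gf (U j t) - Sv t))) (at t within {0..})"
    proof -
      fix j :: nat and t :: real assume j: "j \<in> {1..k}" and t: "t \<ge> 0"
      from DERIV_cmult[OF u_deriv[OF j t], of "\<epsilon> j"]
      show "(U j has_real_derivative (U j t * (Gf (U j t) - Sv t))) (at t within {0..})"
        unfolding U_def[abs_def] by (simp add: eG mult.assoc)
    qed
    show "\<And>t. t \<ge> 0 \<Longrightarrow> (\<Sum>j\<in>{1..k}. (U j t)^2) \<le> 1"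
      using sq_le by (simp add: U_def esq)
    show "1 \<le> l" "l \<le> k" using lr by auto
    show "0 \<le> a" unfolding a_def by simp
    show "\<And>j. j \<in> {1..l} \<Longrightarrow> U j 0 = a"
    proof -
      fix j assume "j \<in> {1..l}"
      with eq have "\<bar>v j \<bullet> w 0\<bar> = \<bar>v 1 \<bullet> w 0\<bar>" by blast
      then show "U j 0 = a" unfolding U_def a_def eabs .
    qed
    show "\<And>j. j \<in> {l+1..k} \<Longrightarrow> 0 \<le> U j 0 \<and> U j 0 < a"
    proof -
      fix j assume "j \<in> {l+1..k}"
      with lt have "\<bar>v j \<bullet> w 0\<bar> < \<bar>v 1 \<bullet> w 0\<bar>" by blast
      then show "0 \<le> U j 0 \<and> U j 0 < a" unfolding U_def a_def eabs by simp
    qed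
  qed
  note R = core.core_result[OF C]
  have bk: "(\<lambda>t. v j \<bullet> w t) = (\<lambda>t. \<epsilon> j * U j t)" for j
    unfolding U_def by (simp add: mult.assoc[symmetric] e2)
  have A: "((\<lambda>t. v j \<bullet> w t) \<longlongrightarrow> sgn (v j \<bullet> w 0) / sqrt (real l)) at_top" if j: "j \<in> {1..l}" for j
  proof -
    have "((\<lambda>t. \<epsilon> j * U j t) \<longlongrightarrow> \<epsilon> j * (if a > 0 then 1 / sqrt (real l) else 0)) at_top"
      using R j by (intro tendsto_mult_left) auto
    moreover have "\<epsilon> j * (if a > 0 then 1 / sqrt (real l) else 0) = sgn (v j \<bullet> w 0) / sqrt (real l)"
    proof (cases "a > 0")
      case True
      moreover have "\<bar>v j \<bullet> w 0\<bar> = \<bar>v 1 \<bullet> w 0\<bar>" using eq j by blast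
      ultimately have "v j \<bullet> w 0 \<noteq> 0" unfolding a_def by auto
      then show ?thesis using True unfolding \<epsilon>_def by (auto simp: sgn_if)
    next
      case False
      moreover have "\<bar>v j \<bullet> w 0\<bar> = \<bar>v 1 \<bullet> w 0\<bar>" using eq j by blast
      ultimately have "v j \<bullet> w 0 = 0" unfolding a_def by auto
      then show ?thesis using False by simp
    qed
    ultimately show ?thesis by (simp add: bk)
  qed
  have B: "((\<lambda>t. v j \<bullet> w t) \<longlongrightarrow> 0) at_top" if j: "j \<in> {l+1..k}" for j
  proof -
    have "((\<lambda>t. \<epsilon> j * U j t) \<longlongrightarrow> \<epsilon> j * 0) at_top"
      using R j by (intro tendsto_mult_left) auto
    then show ?thesis by (simp add: bk)
  qed
  show ?thesis using A B by blast
qed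

end

theorem proposition2:
  fixes \<sigma> \<sigma>s :: "real \<Rightarrow> real"
    and k l :: nat
    and v :: "nat \<Rightarrow> real^'d"
    and w :: "real \<Rightarrow> real^'d"
  assumes standing: "standing_assms \<sigma> \<sigma>s"
    and orthonormal: "\<forall>i\<in>{1..k}. \<forall>j\<in>{1..k}. v i \<bullet> v j = (if i = j then 1 else 0)"
    and ode: "\<forall>t\<ge>0. (w has_vector_derivative
               (- (loss_grad \<sigma> \<sigma>s k v (w t) - (w t \<bullet> loss_grad \<sigma> \<sigma>s k v (w t)) *\<^sub>R w t)))
               (at t within {0..})"
    and unit0: "norm (w 0) = 1"
    and l_range: "l \<in> {1..k}"
  shows
   "((\<forall>j\<in>{1..k}. v j \<bullet> w 0 > 0) \<and>
     (\<forall>j\<in>{1..l}. v j \<bullet> w 0 = v 1 \<bullet> w 0) \<and>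
     (\<forall>j\<in>{l+1..k}. v j \<bullet> w 0 < v 1 \<bullet> w 0) \<and>
     info_exp \<sigma>s \<ge> 3
     \<longrightarrow>
     (\<forall>j\<in>{1..l}. ((\<lambda>t. v j \<bullet> w t) \<longlongrightarrow> 1 / sqrt (real l)) at_top) \<and>
     (\<forall>j\<in>{l+1..k}. ((\<lambda>t. v j \<bullet> w t) \<longlongrightarrow> 0) at_top))
    \<and>
    ((\<forall>x. \<sigma>s (- x) = \<sigma>s x) \<and>
     info_exp \<sigma>s \<ge> 4 \<and>
     (\<forall>j\<in>{1..l}. \<bar>v j \<bullet> w 0\<bar> = \<bar>v 1 \<bullet> w 0\<bar>) \<and>
     (\<forall>j\<in>{l+1..k}. \<bar>v j \<bullet> w 0\<bar> < \<bar>v 1 \<bullet> w 0\<bar>)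
     \<longrightarrow>
     (\<forall>j\<in>{1..l}. ((\<lambda>t. v j \<bullet> w t) \<longlongrightarrow> sgn (v j \<bullet> w 0) / sqrt (real l)) at_top) \<and>
     (\<forall>j\<in>{l+1..k}. ((\<lambda>t. v j \<bullet> w t) \<longlongrightarrow> 0) at_top))"
proof -
  have V: "vec \<sigma> \<sigma>s k v w" by (rule vec.intro[OF standing orthonormal ode unit0])
  have V3: "vec3 \<sigma> \<sigma>s k v w" if "3 \<le> info_exp \<sigma>s"
    by (rule vec3.intro[OF V]) (simp add: vec3_axioms_def that)
  show ?thesis
  proof (intro conjI impI)
    assume H: "(\<forall>j\<in>{1..k}. v j \<bullet> w 0 > 0) \<and>
     (\<forall>j\<in>{1..l}. v j \<bullet> w 0 = v 1 \<bullet> w 0) \<and>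
     (\<forall>j\<in>{l+1..k}. v j \<bullet> w 0 < v 1 \<bullet> w 0) \<and>
     info_exp \<sigma>s \<ge> 3"
    then have "vec3 \<sigma> \<sigma>s k v w" using V3 by blast
    from vec3.partA[OF this] H l_range
    show "(\<forall>j\<in>{1..l}. ((\<lambda>t. v j \<bullet> w t) \<longlongrightarrow> 1 / sqrt (real l)) at_top)" by blast
    from vec3.partA[OF \<open>vec3 \<sigma> \<sigma>s k v w\<close>] H l_range
    show "(\<forall>j\<in>{l+1..k}. ((\<lambda>t. v j \<bullet> w t) \<longlongrightarrow> 0) at_top)" by blast
  next
    assume H: "(\<forall>x. \<sigma>s (- x) = \<sigma>s x) \<and>
     info_exp \<sigma>s \<ge> 4 \<and>
     (\<forall>j\<in>{1..l}. \<bar>v j \<bullet> w 0\<bar> = \<bar>v 1 \<bullet> w 0\<bar>) \<and>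
     (\<forall>j\<in>{l+1..k}. \<bar>v j \<bullet> w 0\<bar> < \<bar>v 1 \<bullet> w 0\<bar>)"
    then have "vec3 \<sigma> \<sigma>s k v w" using V3 by auto
    from vec3.partB[OF this] H l_range
    show "(\<forall>j\<in>{1..l}. ((\<lambda>t. v j \<bullet> w t) \<longlongrightarrow> sgn (v j \<bullet> w 0) / sqrt (real l)) at_top)" by blast
    from vec3.partB[OF \<open>vec3 \<sigma> \<sigma>s k v w\<close>] H l_range
    show "(\<forall>j\<in>{l+1..k}. ((\<lambda>t. v j \<bullet> w t) \<longlongrightarrow> 0) at_top)" by blast
  qed
qed

end
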